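(* Let $G^\sigma$ be a lower-optimal oriented graph and let $x$ be a vertex lying on a cycle of $G$. Then (i) $sr(G^\sigma)=sr(G^\sigma-x)$; (ii) $\alpha(G)=\alpha(G-x)$; (iii) $d(G)=d(G-x)+1$; (iv) $G^\sigma-x$ is lower-optimal; (v) $x$ lies on exactly one cycle of $G$, and $x$ is not a quasi-pendant vertex of $G$.
   Context: An oriented graph $G^\sigma$ is obtained from a simple graph $G$ by assigning a direction to each edge. Its skew-adjacency matrix $S(G^\sigma)=[s_{x,y}]$ has $s_{x,y}=1$ if there is an arc from $x$ to $y$, $s_{x,y}=-1$ if there is an arc from $y$ to $x$, and $0$ otherwise; $sr(G^\sigma)$ is the rank of $S(G^\sigma)$. $\alpha(G)$ is the independence number. $d(G)=|E_G|-|V_G|+\omega(G)$, with $\omega(G)$ the number of components. For every oriented graph one has $sr(G^\sigma)+2\alpha(G)\geqslant 2|V_G|-2d(G)$, and $G^\sigma$ is called lower-optimal if equality holds. $G^\sigma-x$ is obtained by deleting $x$ and its incident arcs. A pendant vertex has degree one; a quasi-pendant vertex is a vertex adjacent to a pendant vertex. *)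

theory Defs
  imports "Jordan_Normal_Form.DL_Rank"
begin

text \<open>The underlying simple graph G has
  vertex set V and an edge {u,v} whenever (u,v) or (v,u) is an arc.\<close>

definition oriented_graph :: "'a set \<Rightarrow> ('a \<times> 'a) set \<Rightarrow> bool" where
  "oriented_graph V A \<longleftrightarrow> finite V \<and> A \<subseteq> V \<times> V \<and>
     (\<forall>u. (u,u) \<notin> A) \<and> (\<forall>u v. (u,v) \<in> A \<longrightarrow> (v,u) \<notin> A)"

definition adj :: "('a \<times> 'a) set \<Rightarrow> 'a \<Rightarrow> 'a \<Rightarrow> bool" where
  "adj A u v \<longleftrightarrow> (u,v) \<in> A \<or> (v,u) \<in> A"

definition edges :: "('a \<times> 'a) set \<Rightarrow> 'a set set" where
  "edges A = {{u,v} | u v. (u,v) \<in> A}"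

definition skew_entry :: "('a \<times> 'a) set \<Rightarrow> 'a \<Rightarrow> 'a \<Rightarrow> real" where
  "skew_entry A x y = (if (x,y) \<in> A then 1 else if (y,x) \<in> A then -1 else 0)"

definition vertex_list :: "'a set \<Rightarrow> 'a list" where
  "vertex_list V = (SOME vs. distinct vs \<and> set vs = V)"

text \<open>Skew-adjacency matrix with respect to a fixed enumeration of V (the rank does not
  depend on the enumeration).\<close>
definition skew_adj_matrix :: "'a set \<Rightarrow> ('a \<times> 'a) set \<Rightarrow> real mat" where
  "skew_adj_matrix V A = (let vs = vertex_list V in
     mat (length vs) (length vs) (\<lambda>(i,j). skew_entry A (vs ! i) (vs ! j)))"

definition skew_rank :: "'a set \<Rightarrow> ('a \<times> 'a) set \<Rightarrow> nat" where
  "skew_rank V A = vec_space.rank (card V) (skew_adj_matrix V A)"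

definition independent_set :: "'a set \<Rightarrow> ('a \<times> 'a) set \<Rightarrow> 'a set \<Rightarrow> bool" where
  "independent_set V A S \<longleftrightarrow> S \<subseteq> V \<and> (\<forall>u\<in>S. \<forall>v\<in>S. \<not> adj A u v)"

definition independence_number :: "'a set \<Rightarrow> ('a \<times> 'a) set \<Rightarrow> nat" where
  "independence_number V A = Max (card ` {S. independent_set V A S})"

definition components_rel :: "'a set \<Rightarrow> ('a \<times> 'a) set \<Rightarrow> ('a \<times> 'a) set" where
  "components_rel V A = ({(u,v). u \<in> V \<and> v \<in> V \<and> adj A u v})\<^sup>* \<inter> (V \<times> V)"

definition omega :: "'a set \<Rightarrow> ('a \<times> 'a) set \<Rightarrow> nat" where
  "omega V A = card (V // components_rel V A)"

definition dim_d :: "'a set \<Rightarrow> ('a \<times> 'a) set \<Rightarrow> int" where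
  "dim_d V A = int (card (edges A)) - int (card V) + int (omega V A)"

definition lower_optimal :: "'a set \<Rightarrow> ('a \<times> 'a) set \<Rightarrow> bool" where
  "lower_optimal V A \<longleftrightarrow>
     int (skew_rank V A) + 2 * int (independence_number V A) = 2 * int (card V) - 2 * dim_d V A"

definition del_vertex_V :: "'a set \<Rightarrow> 'a \<Rightarrow> 'a set" where
  "del_vertex_V V x = V - {x}"

definition del_vertex_A :: "('a \<times> 'a) set \<Rightarrow> 'a \<Rightarrow> ('a \<times> 'a) set" where
  "del_vertex_A A x = {(u,v) \<in> A. u \<noteq> x \<and> v \<noteq> x}"

text \<open>A cycle of G, identified with its edge set: the edges of a closed walk
  v_0 v_1 ... v_{k-1} v_0 through k >= 3 distinct vertices.\<close>
definition is_cycle :: "'a set \<Rightarrow> ('a \<times> 'a) set \<Rightarrow> 'a set set \<Rightarrow> bool" where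
  "is_cycle V A C \<longleftrightarrow> (\<exists>vs. length vs \<ge> 3 \<and> distinct vs \<and> set vs \<subseteq> V \<and>
     (\<forall>i < length vs. adj A (vs ! i) (vs ! ((i + 1) mod length vs))) \<and>
     C = {{vs ! i, vs ! ((i + 1) mod length vs)} | i. i < length vs})"

definition on_cycle :: "'a \<Rightarrow> 'a set set \<Rightarrow> bool" where
  "on_cycle x C \<longleftrightarrow> x \<in> \<Union> C"

definition degree :: "'a set \<Rightarrow> ('a \<times> 'a) set \<Rightarrow> 'a \<Rightarrow> nat" where
  "degree V A v = card {u \<in> V. adj A v u}"

definition pendant :: "'a set \<Rightarrow> ('a \<times> 'a) set \<Rightarrow> 'a \<Rightarrow> bool" where
  "pendant V A v \<longleftrightarrow> v \<in> V \<and> degree V A v = 1"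

definition quasi_pendant :: "'a set \<Rightarrow> ('a \<times> 'a) set \<Rightarrow> 'a \<Rightarrow> bool" where
  "quasi_pendant V A v \<longleftrightarrow> v \<in> V \<and> (\<exists>u\<in>V. adj A v u \<and> pendant V A u)"

end

theory Submission
  imports Defs
begin


definition cindep :: "('a \<Rightarrow> 'a \<Rightarrow> 'b::field) \<Rightarrow> 'a set \<Rightarrow> 'a set \<Rightarrow> bool" where
  "cindep s R J \<longleftrightarrow> (\<forall>c. (\<forall>i\<in>R. (\<Sum>j\<in>J. c j * s i j) = 0) \<longrightarrow> (\<forall>j\<in>J. c j = 0))"

definition crk :: "('a \<Rightarrow> 'a \<Rightarrow> 'b::field) \<Rightarrow> 'a set \<Rightarrow> nat" where
  "crk s W = Max (card ` {J. J \<subseteq> W \<and> cindep s W J})"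

lemma crk_fin: "finite W \<Longrightarrow> finite {J. J \<subseteq> W \<and> cindep s W J}"
  by (rule finite_subset[of _ "Pow W"]) auto

lemma cindep_empty: "cindep s R {}" unfolding cindep_def by auto

lemma crk_ge: "finite W \<Longrightarrow> J \<subseteq> W \<Longrightarrow> cindep s W J \<Longrightarrow> card J \<le> crk s W"
  unfolding crk_def by (rule Max_ge) (auto intro: crk_fin)

lemma crk_obtain: assumes "finite W"
  obtains J where "J \<subseteq> W" "cindep s W J" "card J = crk s W"
proof -
  have "crk s W \<in> card ` {J. J \<subseteq> W \<and> cindep s W J}"
    unfolding crk_def by (rule Max_in) (auto intro: crk_fin[OF assms] cindep_empty)
  then show ?thesis using that by auto
qed

lemma vertex_list: "finite V \<Longrightarrow> distinct (vertex_list V) \<and> set (vertex_list V) = V"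
  unfolding vertex_list_def by (rule someI_ex) (use finite_distinct_list in blast)

context vec_space begin

lemma bridge_aux:
  fixes s :: "'b \<Rightarrow> 'b \<Rightarrow> 'a"
  assumes dvs: "distinct ls" and sv: "set ls = W" and len: "length ls = n"
  and B: "B = mat n n (\<lambda>(i,j). s (ls ! i) (ls ! j))"
  shows "rank B = crk s W"
proof -
  have finW: "finite W" using sv by auto
  have Bc: "B \<in> carrier_mat n n" using B by auto
  define colv where "colv j = col B (find_index ls j)" for j
  have fi: "j \<in> W \<Longrightarrow> find_index ls j < n \<and> ls ! (find_index ls j) = j" for j
    using find_index_leq_length find_index_in_set sv len by metis
  have fi2: "k < n \<Longrightarrow> find_index ls (ls ! k) = k" for k
    using dvs len find_index_inj[of ls] fi[of "ls ! k"] sv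
    by (metis distinct_Ex1 nth_mem)
  have colv_idx: "j \<in> W \<Longrightarrow> p < n \<Longrightarrow> colv j $ p = s (ls ! p) j" for j p
    using fi[of j] unfolding colv_def B by simp
  have colv_dim: "j \<in> W \<Longrightarrow> colv j \<in> carrier_vec n" for j
    using fi[of j] unfolding colv_def B by simp
  have colsB: "set (cols B) = colv ` W"
  proof -
    have "set (cols B) = col B ` {..<n}" using Bc unfolding cols_def by auto
    also have "\<dots> = colv ` W"
    proof
      show "col B ` {..<n} \<subseteq> colv ` W"
      proof
        fix v assume "v \<in> col B ` {..<n}"
        then obtain k where k: "k < n" "v = col B k" by auto
        then have "v = colv (ls ! k)" using fi2 unfolding colv_def by simp
        moreover have "ls ! k \<in> W" using k sv len by auto
        ultimately show "v \<in> colv ` W" by auto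
      qed
      show "colv ` W \<subseteq> col B ` {..<n}" using fi unfolding colv_def by auto
    qed
    finally show ?thesis .
  qed
  have idxW: "i \<in> W \<Longrightarrow> \<exists>p<n. ls ! p = i" for i using fi by blast
  have le1: "card J \<le> rank B" if J: "J \<subseteq> W" "cindep s W J" for J
  proof -
    have inj: "inj_on colv J"
    proof (rule inj_onI, rule ccontr)
      fix j1 j2 assume j: "j1 \<in> J" "j2 \<in> J" "colv j1 = colv j2" "j1 \<noteq> j2"
      define c where "c j = (if j = j1 then 1 else if j = j2 then -1 else (0::'a))" for j
      have "\<forall>i\<in>W. (\<Sum>j\<in>J. c j * s i j) = 0"
      proof
        fix i assume i: "i \<in> W"
        then obtain p where p: "p < n" "ls ! p = i" using idxW by blast
        have fJ: "finite J" using J finW finite_subset by auto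
        have "(\<Sum>j\<in>J. c j * s i j) = (\<Sum>j\<in>{j1,j2}. c j * s i j)"
          by (rule sum.mono_neutral_right) (use fJ j in \<open>auto simp: c_def\<close>)
        also have "\<dots> = s i j1 - s i j2" using j(4) by (simp add: c_def)
        also have "\<dots> = 0"
        proof -
          have "j1 \<in> W" "j2 \<in> W" using j J by auto
          then have "colv j1 $ p = s i j1" "colv j2 $ p = s i j2" using colv_idx p by auto
          then show ?thesis using j(3) by simp
        qed
        finally show "(\<Sum>j\<in>J. c j * s i j) = 0" .
      qed
      then have "c j1 = 0" using J(2) j unfolding cindep_def by blast
      then show False by (simp add: c_def)
    qed
    have li: "lin_indpt (colv ` J)"
    proof
      assume "lin_dep (colv ` J)"
      then obtain Af a v where Af: "finite Af" "Af \<subseteq> colv ` J" "lincomb a Af = 0\<^sub>v n" "v \<in> Af" "a v \<noteq> 0"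
        unfolding lin_dep_def by auto
      define c where "c j = (if colv j \<in> Af then a (colv j) else 0)" for j
      define J' where "J' = {j\<in>J. colv j \<in> Af}"
      have fJ: "finite J" using J finW finite_subset by auto
      have AfJ': "Af = colv ` J'" using Af(2) unfolding J'_def by auto
      have injJ': "inj_on colv J'" using inj unfolding J'_def by (auto intro: inj_on_subset)
      have AfC: "Af \<subseteq> carrier_vec n" using Af(2) J colv_dim by auto
      have "\<forall>i\<in>W. (\<Sum>j\<in>J. c j * s i j) = 0"
      proof
        fix i assume i: "i \<in> W"
        then obtain p where p: "p < n" "ls ! p = i" using idxW by blast
        have "(\<Sum>j\<in>J. c j * s i j) = (\<Sum>j\<in>J'. c j * s i j)"
          by (rule sum.mono_neutral_right) (use fJ in \<open>auto simp: c_def J'_def\<close>)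
        also have "\<dots> = (\<Sum>j\<in>J'. a (colv j) * colv j $ p)"
          by (rule sum.cong) (use J p colv_idx in \<open>auto simp: c_def J'_def\<close>)
        also have "\<dots> = (\<Sum>w\<in>Af. a w * w $ p)" unfolding AfJ' by (simp add: sum.reindex[OF injJ'])
        also have "\<dots> = lincomb a Af $ p" using lincomb_index[OF p(1) AfC] by simp
        also have "\<dots> = 0" using Af(3) p by simp
        finally show "(\<Sum>j\<in>J. c j * s i j) = 0" .
      qed
      then have c0: "\<forall>j\<in>J. c j = 0" using J(2) unfolding cindep_def by blast
      obtain j0 where "j0 \<in> J" "v = colv j0" using Af by auto
      then show False using c0 Af by (auto simp: c_def)
    qed
    have "card (colv ` J) \<le> rank B"
      by (rule rank_ge_card_indpt[OF Bc _ li]) (use colsB J in auto)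
    then show ?thesis using card_image[OF inj] by simp
  qed
  have le2: "rank B \<le> crk s W"
  proof -
    have "lin_indpt {}" unfolding lin_dep_def by auto
    then obtain S where S: "finite S" "maximal S (\<lambda>T. T \<subseteq> set (cols B) \<and> lin_indpt T)"
      using maximal_exists_superset[of "set (cols B)" "\<lambda>T. T \<subseteq> set (cols B) \<and> lin_indpt T" "{}"]
      by auto
    have rS: "rank B = card S" using rank_card_indpt[OF Bc S(2)] .
    have SB: "S \<subseteq> colv ` W" "lin_indpt S" using S(2) colsB unfolding maximal_def by auto
    define g where "g w = (SOME j. j \<in> W \<and> colv j = w)" for w
    have g: "w \<in> S \<Longrightarrow> g w \<in> W \<and> colv (g w) = w" for w
      unfolding g_def by (rule someI_ex) (use SB in auto)
    have injg: "inj_on g S" by (rule inj_onI) (metis g)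
    have JW: "g ` S \<subseteq> W" using g by auto
    have SC: "S \<subseteq> carrier_vec n" using SB colv_dim by auto
    have ci: "cindep s W (g ` S)"
      unfolding cindep_def
    proof (intro allI impI)
      fix c assume c: "\<forall>i\<in>W. (\<Sum>j\<in>g ` S. c j * s i j) = 0"
      define a where "a w = c (g w)" for w
      have "lincomb a S = 0\<^sub>v n"
      proof (rule eq_vecI)
        show "dim_vec (lincomb a S) = dim_vec (0\<^sub>v n)" using lincomb_dim[OF S(1) SC] by simp
        fix p assume "p < dim_vec (0\<^sub>v n)"
        then have p: "p < n" by simp
        have "lincomb a S $ p = (\<Sum>w\<in>S. a w * w $ p)" using lincomb_index[OF p SC] .
        also have "\<dots> = (\<Sum>w\<in>S. c (g w) * s (ls ! p) (g w))"
        proof (rule sum.cong)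
          fix w assume w: "w \<in> S"
          have "w $ p = s (ls ! p) (g w)" using colv_idx[of "g w" p] g[OF w] p by metis
          then show "a w * w $ p = c (g w) * s (ls ! p) (g w)" by (simp add: a_def)
        qed simp
        also have "\<dots> = (\<Sum>j\<in>g ` S. c j * s (ls ! p) j)" by (simp add: sum.reindex[OF injg])
        also have "\<dots> = 0" using c p sv len by auto
        finally show "lincomb a S $ p = 0\<^sub>v n $ p" using p by simp
      qed
      then have "\<forall>w\<in>S. a w = 0" using SB(2) S(1) unfolding lin_dep_def by blast
      then show "\<forall>j\<in>g ` S. c j = 0" by (auto simp: a_def)
    qed
    have "card (g ` S) \<le> crk s W" by (rule crk_ge[OF finW JW ci])
    then show ?thesis using rS card_image[OF injg] by simp
  qed
  obtain J where J: "J \<subseteq> W" "cindep s W J" "card J = crk s W" using crk_obtain[OF finW] by blast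
  show ?thesis using le1[OF J(1,2)] J(3) le2 by simp
qed

end

lemma skew_rank_crk: "finite W \<Longrightarrow> skew_rank W A = crk (skew_entry A) W"
proof -
  assume fW: "finite W"
  let ?ls = "vertex_list W"
  have vl: "distinct ?ls" "set ?ls = W" using vertex_list[OF fW] by auto
  have len: "length ?ls = card W" using vl distinct_card by fastforce
  have "vec_space.rank (card W) (mat (card W) (card W) (\<lambda>(i,j). skew_entry A (?ls!i) (?ls!j))) = crk (skew_entry A) W"
    by (rule vec_space.bridge_aux[OF vl len]) simp
  then show ?thesis unfolding skew_rank_def skew_adj_matrix_def Let_def len .
qed


lemma cindep_rows: "cindep s R J \<Longrightarrow> R \<subseteq> R' \<Longrightarrow> cindep s R' J"
  unfolding cindep_def by blast

lemma cindep_cols: assumes "cindep s R J" "J' \<subseteq> J" "finite J" shows "cindep s R J'"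
  unfolding cindep_def
proof (intro allI impI)
  fix c assume c: "\<forall>i\<in>R. (\<Sum>j\<in>J'. c j * s i j) = 0"
  define c' where "c' j = (if j \<in> J' then c j else 0)" for j
  have "\<forall>i\<in>R. (\<Sum>j\<in>J. c' j * s i j) = 0"
  proof
    fix i assume "i \<in> R"
    have "(\<Sum>j\<in>J. c' j * s i j) = (\<Sum>j\<in>J'. c' j * s i j)"
      by (rule sum.mono_neutral_right) (use assms in \<open>auto simp: c'_def\<close>)
    also have "\<dots> = (\<Sum>j\<in>J'. c j * s i j)" by (rule sum.cong) (auto simp: c'_def)
    finally show "(\<Sum>j\<in>J. c' j * s i j) = 0" using c \<open>i \<in> R\<close> by simp
  qed
  then have "\<forall>j\<in>J. c' j = 0" using assms(1) unfolding cindep_def by blast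
  then show "\<forall>j\<in>J'. c j = 0" using assms(2) unfolding c'_def by (metis subsetD)
qed

lemma cindep_delrow:
  fixes s :: "'a \<Rightarrow> 'a \<Rightarrow> 'b::field"
  assumes fJ: "finite J" and ci: "cindep s R J" and x: "x \<in> R"
  shows "\<exists>J'\<subseteq>J. card J \<le> card J' + 1 \<and> cindep s (R - {x}) J'"
proof (cases "cindep s (R - {x}) J")
  case True then show ?thesis by auto
next
  case False
  then obtain c0 j0 where c0: "\<forall>i\<in>R-{x}. (\<Sum>j\<in>J. c0 j * s i j) = 0" and j0: "j0 \<in> J" "c0 j0 \<noteq> 0"
    unfolding cindep_def by blast
  define \<alpha> where "\<alpha> = (\<Sum>j\<in>J. c0 j * s x j)"
  have a0: "\<alpha> \<noteq> 0"
  proof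
    assume "\<alpha> = 0"
    then have "\<forall>i\<in>R. (\<Sum>j\<in>J. c0 j * s i j) = 0" using c0 unfolding \<alpha>_def by auto
    then show False using ci j0 unfolding cindep_def by blast
  qed
  have "cindep s (R - {x}) (J - {j0})"
    unfolding cindep_def
  proof (intro allI impI)
    fix d assume d: "\<forall>i\<in>R - {x}. (\<Sum>j\<in>J - {j0}. d j * s i j) = 0"
    define d' where "d' j = (if j = j0 then 0 else d j)" for j
    have dd: "(\<Sum>j\<in>J. d' j * s i j) = (\<Sum>j\<in>J - {j0}. d j * s i j)" for i
    proof -
      have "(\<Sum>j\<in>J. d' j * s i j) = (\<Sum>j\<in>J - {j0}. d' j * s i j)"
        by (rule sum.mono_neutral_right) (use fJ in \<open>auto simp: d'_def\<close>)
      also have "\<dots> = (\<Sum>j\<in>J - {j0}. d j * s i j)" by (rule sum.cong) (auto simp: d'_def)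
      finally show ?thesis .
    qed
    define \<beta> where "\<beta> = (\<Sum>j\<in>J. d' j * s x j)"
    define e where "e j = d' j - (\<beta> / \<alpha>) * c0 j" for j
    have "\<forall>i\<in>R. (\<Sum>j\<in>J. e j * s i j) = 0"
    proof
      fix i assume i: "i \<in> R"
      have "(\<Sum>j\<in>J. e j * s i j) = (\<Sum>j\<in>J. d' j * s i j) - (\<beta> / \<alpha>) * (\<Sum>j\<in>J. c0 j * s i j)"
        unfolding e_def by (simp add: algebra_simps sum_subtractf sum_distrib_left)
      also have "\<dots> = 0"
      proof (cases "i = x")
        case True then show ?thesis using a0 unfolding \<beta>_def \<alpha>_def by simp
      next
        case False then show ?thesis using i d c0 dd by simp
      qed
      finally show "(\<Sum>j\<in>J. e j * s i j) = 0" .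
    qed
    then have e0: "\<forall>j\<in>J. e j = 0" using ci unfolding cindep_def by blast
    then have "e j0 = 0" using j0 by simp
    then have "(\<beta> / \<alpha>) * c0 j0 = 0" by (simp add: e_def d'_def)
    then have "\<beta> = 0" using a0 j0 by simp
    then have dz: "\<forall>j\<in>J. d' j = 0" using e0 by (simp add: e_def)
    show "\<forall>j\<in>J - {j0}. d j = 0"
    proof
      fix j assume j: "j \<in> J - {j0}"
      then have "d' j = 0" using dz by blast
      then show "d j = 0" using j by (simp add: d'_def)
    qed
  qed
  moreover have "card J \<le> card (J - {j0}) + 1" using fJ j0 by (simp add: card_Diff_singleton)
  ultimately show ?thesis by blast
qed

lemma crk_del_le: assumes "finite W" shows "crk s (W - {x}) \<le> crk s W"
proof -
  obtain J where J: "J \<subseteq> W - {x}" "cindep s (W - {x}) J" "card J = crk s (W - {x})"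
    using crk_obtain[of "W - {x}"] assms by blast
  have "cindep s W J" using cindep_rows[OF J(2)] by blast
  then show ?thesis using crk_ge[OF assms, of J] J by auto
qed

lemma crk_del_ge: assumes fW: "finite W" and x: "x \<in> W" shows "crk s W \<le> crk s (W - {x}) + 2"
proof -
  obtain J where J: "J \<subseteq> W" "cindep s W J" "card J = crk s W"
    using crk_obtain[OF fW] by blast
  have fJ: "finite J" using J fW finite_subset by auto
  have c1: "cindep s W (J - {x})" using cindep_cols[OF J(2) _ fJ] by blast
  obtain J' where J': "J' \<subseteq> J - {x}" "card (J - {x}) \<le> card J' + 1" "cindep s (W - {x}) J'"
    using cindep_delrow[OF _ c1 x] fJ by blast
  have "card J \<le> card (J - {x}) + 1" using fJ by (cases "x \<in> J") (auto simp: card_Diff_singleton_if card_gt_0_iff)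
  moreover have "card J' \<le> crk s (W - {x})" using crk_ge[of "W - {x}" J' s] J' fW J by auto
  ultimately show ?thesis using J' J by linarith
qed

lemma crk_iso: assumes fW: "finite W" and y: "y \<in> W"
  and r: "\<forall>j\<in>W. s y j = 0" and c: "\<forall>i\<in>W. s i y = 0"
  shows "crk s W \<le> crk s (W - {y})"
proof -
  obtain J where J: "J \<subseteq> W" "cindep s W J" "card J = crk s W"
    using crk_obtain[OF fW] by blast
  have fJ: "finite J" using J fW finite_subset by auto
  have yJ: "y \<notin> J"
  proof
    assume yJ: "y \<in> J"
    define c' where "c' j = (if j = y then 1 else 0::'b)" for j
    have "\<forall>i\<in>W. (\<Sum>j\<in>J. c' j * s i j) = 0"
    proof
      fix i assume i: "i \<in> W"
      have "(\<Sum>j\<in>J. c' j * s i j) = (\<Sum>j\<in>{y}. c' j * s i j)"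
        by (rule sum.mono_neutral_right) (use fJ yJ in \<open>auto simp: c'_def\<close>)
      then show "(\<Sum>j\<in>J. c' j * s i j) = 0" using c i by (simp add: c'_def)
    qed
    then have "\<forall>j\<in>J. c' j = 0" using J(2) unfolding cindep_def by blast
    then have "c' y = 0" using yJ by blast
    then show False by (simp add: c'_def)
  qed
  have "cindep s (W - {y}) J"
    unfolding cindep_def
  proof (intro allI impI)
    fix d assume d: "\<forall>i\<in>W - {y}. (\<Sum>j\<in>J. d j * s i j) = 0"
    have "\<forall>i\<in>W. (\<Sum>j\<in>J. d j * s i j) = 0"
    proof
      fix i assume "i \<in> W"
      show "(\<Sum>j\<in>J. d j * s i j) = 0"
      proof (cases "i = y")
        case True then show ?thesis by (intro sum.neutral) (use r J in auto)
      next
        case False then show ?thesis using d \<open>i \<in> W\<close> by auto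
      qed
    qed
    then show "\<forall>j\<in>J. d j = 0" using J(2) unfolding cindep_def by blast
  qed
  then show ?thesis using crk_ge[of "W - {y}" J s] J yJ fW by auto
qed

lemma crk_pend:
  fixes s :: "'a \<Rightarrow> 'a \<Rightarrow> 'b::field"
  assumes fW: "finite W" and u: "u \<in> W" and v: "v \<in> W" and uv: "u \<noteq> v"
  and suv: "s u v \<noteq> 0" and svu: "s v u \<noteq> 0"
  and r: "\<forall>j\<in>W-{v}. s u j = 0" and c: "\<forall>i\<in>W-{v}. s i u = 0"
  shows "crk s (W - {u, v}) + 2 \<le> crk s W"
proof -
  obtain J where J: "J \<subseteq> W - {u,v}" "cindep s (W - {u,v}) J" "card J = crk s (W - {u,v})"
    using crk_obtain[of "W - {u,v}"] fW by blast
  have fJ: "finite J" using J fW finite_subset by auto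
  let ?K = "insert u (insert v J)"
  have uJ: "u \<notin> J" "v \<notin> J" using J by auto
  have ciK: "cindep s W ?K"
    unfolding cindep_def
  proof (intro allI impI)
    fix d assume d: "\<forall>i\<in>W. (\<Sum>j\<in>?K. d j * s i j) = 0"
    have sK: "(\<Sum>j\<in>?K. d j * s i j) = d u * s i u + d v * s i v + (\<Sum>j\<in>J. d j * s i j)" for i
      using fJ uJ uv by (simp add: sum.insert)
    have suu: "s u u = 0" using r u uv by auto
    have "(\<Sum>j\<in>J. d j * s u j) = 0" by (intro sum.neutral) (use r J in auto)
    then have "d v * s u v = 0" using d u sK[of u] suu by simp
    then have dv: "d v = 0" using suv by simp
    have "\<forall>i\<in>W - {u,v}. (\<Sum>j\<in>J. d j * s i j) = 0"
    proof
      fix i assume i: "i \<in> W - {u,v}"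
      then have "s i u = 0" using c by auto
      then show "(\<Sum>j\<in>J. d j * s i j) = 0" using d i sK[of i] dv by simp
    qed
    then have dJ: "\<forall>j\<in>J. d j = 0" using J(2) unfolding cindep_def by blast
    then have "(\<Sum>j\<in>J. d j * s v j) = 0" by simp
    then have "d u * s v u = 0" using d v sK[of v] dv by simp
    then have "d u = 0" using svu by simp
    then show "\<forall>j\<in>?K. d j = 0" using dv dJ by auto
  qed
  have "card ?K = card J + 2" using fJ uJ uv by simp
  moreover have "?K \<subseteq> W" using J u v by auto
  ultimately show ?thesis using crk_ge[OF fW _ ciK] J by auto
qed


definition nbrs :: "'a set \<Rightarrow> ('a \<times> 'a) set \<Rightarrow> 'a \<Rightarrow> 'a set" where
  "nbrs W A x = {u \<in> W. adj A x u}"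
definition ered :: "'a set \<Rightarrow> ('a \<times> 'a) set \<Rightarrow> ('a \<times> 'a) set" where
  "ered W A = {(u,v). u \<in> W \<and> v \<in> W \<and> adj A u v}"
definition cls :: "'a set \<Rightarrow> ('a \<times> 'a) set \<Rightarrow> 'a \<Rightarrow> 'a set" where
  "cls W A y = {z. (y,z) \<in> (ered W A)\<^sup>*}"
definition mm :: "'a set \<Rightarrow> ('a \<times> 'a) set \<Rightarrow> nat" where
  "mm W A = card {e \<in> edges A. e \<subseteq> W}"
definition dd :: "'a set \<Rightarrow> ('a \<times> 'a) set \<Rightarrow> int" where
  "dd W A = int (mm W A) - int (card W) + int (omega W A)"

lemma adj_sym: "adj A u v = adj A v u" unfolding adj_def by auto

lemma noloop: "oriented_graph V A \<Longrightarrow> \<not> adj A u u"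
  unfolding oriented_graph_def adj_def by auto

lemma ered_sym: "(u,v) \<in> ered W A \<Longrightarrow> (v,u) \<in> ered W A"
  unfolding ered_def using adj_sym by fastforce

lemma rt_sym: "(u,v) \<in> (ered W A)\<^sup>* \<Longrightarrow> (v,u) \<in> (ered W A)\<^sup>*"
proof (induction rule: rtrancl_induct)
  case base then show ?case by simp
next
  case (step y z)
  have "(z,y) \<in> ered W A" using step(2) by (rule ered_sym)
  then show ?case using step(3) by (rule converse_rtrancl_into_rtrancl)
qed

lemma rt_in: "(u,v) \<in> (ered W A)\<^sup>* \<Longrightarrow> u \<noteq> v \<Longrightarrow> u \<in> W \<and> v \<in> W"
proof (induction rule: rtrancl_induct)
  case base then show ?case by simp
next
  case (step y z)
  have yz: "y \<in> W" "z \<in> W" using step(2) unfolding ered_def by auto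
  show ?case
  proof (cases "u = y")
    case True then show ?thesis using yz by simp
  next
    case False then show ?thesis using step(3) yz by simp
  qed
qed

lemma cls_sub: "y \<in> W \<Longrightarrow> cls W A y \<subseteq> W"
proof
  fix z assume "y \<in> W" "z \<in> cls W A y"
  then show "z \<in> W" using rt_in[of y z W A] unfolding cls_def by (cases "y = z") auto
qed

lemma cls_refl: "y \<in> cls W A y" unfolding cls_def by simp

lemma cls_eq: assumes "(y,z) \<in> (ered W A)\<^sup>*" shows "cls W A y = cls W A z"
proof
  have zy: "(z,y) \<in> (ered W A)\<^sup>*" using rt_sym[OF assms] .
  show "cls W A y \<subseteq> cls W A z" unfolding cls_def using rtrancl_trans[OF zy] by blast
  show "cls W A z \<subseteq> cls W A y" unfolding cls_def using rtrancl_trans[OF assms] by blast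
qed

lemma comp_ered: "components_rel W A = (ered W A)\<^sup>* \<inter> W \<times> W"
  unfolding components_rel_def ered_def by simp

lemma comp_img: assumes y: "y \<in> W" shows "components_rel W A `` {y} = cls W A y"
proof
  show "components_rel W A `` {y} \<subseteq> cls W A y" unfolding comp_ered cls_def by auto
  show "cls W A y \<subseteq> components_rel W A `` {y}"
    using cls_sub[OF y, of A] y unfolding comp_ered cls_def by auto
qed

lemma omega_cls: "omega W A = card (cls W A ` W)"
proof -
  have "W // components_rel W A = (\<lambda>y. components_rel W A `` {y}) ` W"
    unfolding quotient_def by auto
  also have "\<dots> = cls W A ` W" by (rule image_cong) (simp_all add: comp_img)
  finally show ?thesis unfolding omega_def by simp
qed

lemma ered_mono: "W' \<subseteq> W \<Longrightarrow> (ered W' A)\<^sup>* \<subseteq> (ered W A)\<^sup>*"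
  by (rule rtrancl_mono) (auto simp: ered_def)

lemma path_avoid:
  assumes yz: "(y,z) \<in> (ered W A)\<^sup>*" and av: "\<forall>w. (y,w) \<in> (ered W A)\<^sup>* \<longrightarrow> w \<noteq> x"
  shows "(y,z) \<in> (ered (W - {x}) A)\<^sup>*"
  using yz
proof (induction rule: rtrancl_induct)
  case base then show ?case by simp
next
  case (step w z)
  have zz: "(y,z) \<in> (ered W A)\<^sup>*" using step(1,2) by (rule rtrancl_into_rtrancl)
  have "w \<noteq> x" using av step(1) by blast
  moreover have "z \<noteq> x" using av zz by blast
  ultimately have "(w,z) \<in> ered (W - {x}) A" using step(2) unfolding ered_def by blast
  with step(3) show ?case by (rule rtrancl_into_rtrancl)
qed

lemma path_last:
  assumes xy: "(x,y) \<in> (ered W A)\<^sup>*" and ne: "y \<noteq> x"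
  shows "\<exists>a\<in>nbrs W A x. (a,y) \<in> (ered (W - {x}) A)\<^sup>*"
  using xy ne
proof (induction rule: rtrancl_induct)
  case base then show ?case by simp
next
  case (step w z)
  show ?case
  proof (cases "w = x")
    case True
    then have "z \<in> nbrs W A x" using step(2) unfolding ered_def nbrs_def by blast
    then show ?thesis by blast
  next
    case False
    then obtain a where a: "a \<in> nbrs W A x" "(a,w) \<in> (ered (W - {x}) A)\<^sup>*" using step(3) by blast
    have "(w,z) \<in> ered (W - {x}) A" using step(2) False step(4) unfolding ered_def by blast
    with a(2) have "(a,z) \<in> (ered (W - {x}) A)\<^sup>*" by (rule rtrancl_into_rtrancl)
    then show ?thesis using a(1) by blast
  qed
qed

lemma comp_count:
  assumes og: "oriented_graph V A" and fW: "finite W" and x: "x \<in> W"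
  shows "omega (W - {x}) A + 1 = omega W A + card (cls (W - {x}) A ` nbrs W A x)"
proof -
  define W' where "W' = W - {x}"
  define Cx where "Cx = cls W A x"
  define Y where "Y = {y \<in> W. y \<notin> Cx}"
  define G where "G = cls W A ` Y"
  define N where "N = nbrs W A x"
  define H where "H = cls W' A ` N"
  have fG: "finite G" "finite H" using fW unfolding G_def Y_def H_def N_def nbrs_def by auto
  have F: "cls W A ` W = insert Cx G"
  proof
    show "cls W A ` W \<subseteq> insert Cx G"
    proof
      fix C assume "C \<in> cls W A ` W"
      then obtain y where y: "y \<in> W" "C = cls W A y" by auto
      show "C \<in> insert Cx G"
      proof (cases "y \<in> Cx")
        case True then have "(x,y) \<in> (ered W A)\<^sup>*" unfolding Cx_def cls_def by simp
        then have "cls W A x = cls W A y" by (rule cls_eq)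
        then show ?thesis using y Cx_def by simp
      next
        case False then show ?thesis using y unfolding G_def Y_def by auto
      qed
    qed
    show "insert Cx G \<subseteq> cls W A ` W" using x unfolding G_def Y_def Cx_def by auto
  qed
  have CG: "Cx \<notin> G"
  proof
    assume "Cx \<in> G"
    then obtain y where "y \<in> Y" "Cx = cls W A y" unfolding G_def by auto
    then show False using cls_refl[of y W A] unfolding Y_def by auto
  qed
  have cardF: "omega W A = card G + 1" unfolding omega_cls F using CG fG by simp
  have same: "cls W' A y = cls W A y" if y: "y \<in> Y" for y
  proof
    show "cls W' A y \<subseteq> cls W A y" unfolding cls_def W'_def using ered_mono[of "W - {x}" W A] by auto
    show "cls W A y \<subseteq> cls W' A y"
    proof
      fix z assume "z \<in> cls W A y"
      then have yz: "(y,z) \<in> (ered W A)\<^sup>*" unfolding cls_def by simp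
      have "\<forall>w. (y,w) \<in> (ered W A)\<^sup>* \<longrightarrow> w \<noteq> x"
      proof (intro allI impI notI)
        fix w assume "(y,w) \<in> (ered W A)\<^sup>*" "w = x"
        then have "(y,x) \<in> (ered W A)\<^sup>*" by simp
        then have "(x,y) \<in> (ered W A)\<^sup>*" by (rule rt_sym)
        then show False using y unfolding Y_def Cx_def cls_def by auto
      qed
      then have "(y,z) \<in> (ered (W - {x}) A)\<^sup>*" by (rule path_avoid[OF yz])
      then show "z \<in> cls W' A y" unfolding cls_def W'_def by simp
    qed
  qed
  have nx: "a \<noteq> x" if "a \<in> N" for a using that noloop[OF og] unfolding N_def nbrs_def by auto
  have F': "cls W' A ` W' = G \<union> H"
  proof
    show "cls W' A ` W' \<subseteq> G \<union> H"
    proof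
      fix C assume "C \<in> cls W' A ` W'"
      then obtain y where y: "y \<in> W'" "C = cls W' A y" by auto
      show "C \<in> G \<union> H"
      proof (cases "y \<in> Cx")
        case True
        then have "(x,y) \<in> (ered W A)\<^sup>*" "y \<noteq> x" using y unfolding Cx_def cls_def W'_def by auto
        from path_last[OF this(1) this(2)] obtain a where
          a: "a \<in> nbrs W A x" "(a,y) \<in> (ered (W - {x}) A)\<^sup>*" by blast
        then have "cls W' A a = cls W' A y" unfolding W'_def by (intro cls_eq)
        then have "C = cls W' A a" using y by simp
        moreover have "a \<in> N" using a unfolding N_def by simp
        ultimately show ?thesis unfolding H_def by blast
      next
        case False
        then have yY: "y \<in> Y" using y unfolding Y_def W'_def by auto
        then have "C = cls W A y" using y(2) same[OF yY] by simp
        then have "C \<in> G" unfolding G_def using yY by blast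
        then show ?thesis by blast
      qed
    qed
    show "G \<union> H \<subseteq> cls W' A ` W'"
    proof
      fix C assume "C \<in> G \<union> H"
      then show "C \<in> cls W' A ` W'"
      proof
        assume "C \<in> G"
        then obtain y where y: "y \<in> Y" "C = cls W A y" unfolding G_def by auto
        have "y \<noteq> x" using y cls_refl[of x W A] unfolding Y_def Cx_def by auto
        then have yW: "y \<in> W'" using y(1) unfolding Y_def W'_def by simp
        have "C = cls W' A y" using y(2) same[OF y(1)] by simp
        then show ?thesis using yW by blast
      next
        assume "C \<in> H"
        then obtain a where a: "a \<in> N" "C = cls W' A a" unfolding H_def by auto
        have "a \<in> W'" using nx[OF a(1)] a(1) unfolding N_def nbrs_def W'_def by simp
        then show ?thesis using a(2) by blast
      qed
    qed
  qed
  have GH: "G \<inter> H = {}"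
  proof (rule ccontr)
    assume "G \<inter> H \<noteq> {}"
    then obtain y a where y: "y \<in> Y" "a \<in> N" "cls W A y = cls W' A a" unfolding G_def H_def by auto
    then have "a \<in> cls W A y" using cls_refl[of a W' A] by simp
    then have "(y,a) \<in> (ered W A)\<^sup>*" unfolding cls_def by simp
    moreover have "(x,a) \<in> ered W A" using y(2) x unfolding N_def nbrs_def ered_def by auto
    then have "(a,x) \<in> ered W A" by (rule ered_sym)
    ultimately have "(y,x) \<in> (ered W A)\<^sup>*" by (rule rtrancl_into_rtrancl)
    then have "(x,y) \<in> (ered W A)\<^sup>*" by (rule rt_sym)
    then show False using y unfolding Y_def Cx_def cls_def by auto
  qed
  have "omega W' A = card G + card H" unfolding omega_cls F' using card_Un_disjoint[OF fG GH] .
  then show ?thesis using cardF unfolding W'_def H_def N_def by simp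
qed


lemma modinj_aux: "(s::nat) \<le> t \<Longrightarrow> t < L \<Longrightarrow> (p+s) mod L = (p+t) mod L \<Longrightarrow> s = t"
proof -
  assume a: "s \<le> t" "t < L" "(p+s) mod L = (p+t) mod L"
  have "L dvd (p+t) - (p+s)" using mod_eq_dvd_iff_nat[of "p+s" "p+t" L] a by simp
  then have "L dvd t - s" by simp
  moreover have "t - s < L" using a by simp
  ultimately have "t - s = 0" using nat_dvd_not_less by (metis gr0I)
  then show "s = t" using a by simp
qed

lemma modinj: "(s::nat) < L \<Longrightarrow> t < L \<Longrightarrow> (p+s) mod L = (p+t) mod L \<Longrightarrow> s = t"
  using modinj_aux[of s t L p] modinj_aux[of t s L p] by (cases "s \<le> t") auto

lemma og_fin: "oriented_graph V A \<Longrightarrow> finite V" unfolding oriented_graph_def by simp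

lemma og_sub: "oriented_graph V A \<Longrightarrow> A \<subseteq> V \<times> V" unfolding oriented_graph_def by simp

lemma edges_img: "edges A = (\<lambda>(u,v). {u,v}) ` A"
  unfolding edges_def by auto

lemma edges_fin: assumes "oriented_graph V A" shows "finite (edges A)"
proof -
  have "finite A" using og_fin[OF assms] og_sub[OF assms] finite_subset by (metis finite_SigmaI)
  then show ?thesis unfolding edges_img by simp
qed

lemma nbrs_fin: "finite W \<Longrightarrow> finite (nbrs W A x)" unfolding nbrs_def by simp

lemma mm_count:
  assumes og: "oriented_graph V A" and x: "x \<in> W"
  shows "mm W A = mm (W - {x}) A + card (nbrs W A x)"
proof -
  define E1 where "E1 = {e \<in> edges A. e \<subseteq> W}"
  define E0 where "E0 = {e \<in> edges A. e \<subseteq> W - {x}}"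
  define P where "P = (\<lambda>u. {x,u}) ` nbrs W A x"
  have fE: "finite E0" using edges_fin[OF og] unfolding E0_def by simp
  have "P \<subseteq> edges A"
  proof
    fix e assume "e \<in> P"
    then obtain u where u: "u \<in> nbrs W A x" "e = {x,u}" unfolding P_def by auto
    then have "(x,u) \<in> A \<or> (u,x) \<in> A" unfolding nbrs_def adj_def by simp
    then show "e \<in> edges A"
    proof
      assume "(x,u) \<in> A" then show ?thesis using u(2) unfolding edges_def by blast
    next
      assume "(u,x) \<in> A" then have "{u,x} \<in> edges A" unfolding edges_def by blast
      then show ?thesis using u(2) by (simp add: insert_commute)
    qed
  qed
  then have fP: "finite P" using edges_fin[OF og] finite_subset by blast
  have E1: "E1 = E0 \<union> P"
  proof
    show "E1 \<subseteq> E0 \<union> P"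
    proof
      fix e assume e: "e \<in> E1"
      then obtain u v where uv: "(u,v) \<in> A" "e = {u,v}" "e \<subseteq> W" unfolding E1_def edges_def by blast
      show "e \<in> E0 \<union> P"
      proof (cases "x \<in> e")
        case False then show ?thesis using e unfolding E1_def E0_def by blast
      next
        case True
        then have "x = u \<or> x = v" using uv by simp
        then show ?thesis
        proof
          assume xu: "x = u"
          then have "v \<in> nbrs W A x" using uv unfolding nbrs_def adj_def by simp
          then have "{x,v} \<in> P" unfolding P_def by blast
          then show ?thesis using uv xu by simp
        next
          assume xv: "x = v"
          then have "u \<in> nbrs W A x" using uv unfolding nbrs_def adj_def by simp
          then have "{x,u} \<in> P" unfolding P_def by blast
          then show ?thesis using uv xv by (simp add: insert_commute)
        qed
      qed
    qed
    show "E0 \<union> P \<subseteq> E1"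
    proof
      fix e assume "e \<in> E0 \<union> P"
      then show "e \<in> E1"
      proof
        assume "e \<in> E0" then show ?thesis unfolding E0_def E1_def by blast
      next
        assume eP: "e \<in> P"
        then have "e \<in> edges A" using \<open>P \<subseteq> edges A\<close> by blast
        moreover obtain u where "u \<in> nbrs W A x" "e = {x,u}" using eP unfolding P_def by blast
        then have "e \<subseteq> W" using x unfolding nbrs_def by blast
        ultimately show ?thesis unfolding E1_def by blast
      qed
    qed
  qed
  have disj: "E0 \<inter> P = {}" unfolding E0_def P_def by blast
  have inj: "inj_on (\<lambda>u. {x,u}) (nbrs W A x)"
  proof (rule inj_onI)
    fix u1 u2 assume u: "u1 \<in> nbrs W A x" "u2 \<in> nbrs W A x" "{x,u1} = {x,u2}"
    have "u1 \<noteq> x" "u2 \<noteq> x" using u noloop[OF og] unfolding nbrs_def by auto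
    then show "u1 = u2" using u(3) by (metis doubleton_eq_iff)
  qed
  have "card E1 = card E0 + card P" unfolding E1 using card_Un_disjoint[OF fE fP disj] .
  moreover have "card P = card (nbrs W A x)" unfolding P_def using card_image[OF inj] .
  ultimately show ?thesis unfolding mm_def E1_def E0_def by simp
qed

lemma dd_drop:
  assumes og: "oriented_graph V A" and W: "W \<subseteq> V" and x: "x \<in> W"
  shows "dd W A = dd (W - {x}) A + int (card (nbrs W A x)) - int (card (cls (W - {x}) A ` nbrs W A x))"
proof -
  have fW: "finite W" using og_fin[OF og] W finite_subset by blast
  have c: "card W = card (W - {x}) + 1" using card_Suc_Diff1[OF fW x] by simp
  have 1: "int (mm W A) = int (mm (W - {x}) A) + int (card (nbrs W A x))"
    using mm_count[OF og x] by (simp only: of_nat_add)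
  have 2: "int (omega (W - {x}) A) + 1 = int (omega W A) + int (card (cls (W - {x}) A ` nbrs W A x))"
    using comp_count[OF og fW x] by (metis of_nat_add of_nat_1)
  have 3: "int (card W) = int (card (W - {x})) + 1" using c by (simp only: of_nat_add of_nat_1)
  show ?thesis unfolding dd_def using 1 2 3 by linarith
qed

lemma drop_nonneg: "finite W \<Longrightarrow> card (cls W' A ` nbrs W A x) \<le> card (nbrs W A x)"
  by (rule card_image_le[OF nbrs_fin])

lemma dd_mono:
  assumes og: "oriented_graph V A" and W: "W \<subseteq> V"
  shows "dd (W - {x}) A \<le> dd W A"
proof (cases "x \<in> W")
  case True
  have fW: "finite W" using og_fin[OF og] W finite_subset by blast
  show ?thesis using dd_drop[OF og W True] drop_nonneg[OF fW, of "W - {x}" A x] by simp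
next
  case False then show ?thesis by simp
qed

lemma dd_empty: "dd {} A = 0"
proof -
  have "{e \<in> edges A. e \<subseteq> {}} = {}" unfolding edges_def by auto
  then show ?thesis unfolding dd_def mm_def omega_cls by simp
qed

lemma dd_nonneg:
  assumes og: "oriented_graph V A" and W: "W \<subseteq> V"
  shows "0 \<le> dd W A"
proof -
  have fW: "finite W" using og_fin[OF og] W finite_subset by blast
  show ?thesis using fW W
  proof (induction rule: finite_induct)
    case empty then show ?case by (simp add: dd_empty)
  next
    case (insert x F)
    have "dd (insert x F - {x}) A \<le> dd (insert x F) A" by (rule dd_mono[OF og insert(4)])
    moreover have "insert x F - {x} = F" using insert(2) by simp
    ultimately show ?case using insert by simp
  qed
qed


lemma cycle_seq:
  assumes cyc: "is_cycle V A C" and on: "on_cycle x C"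
  obtains f L where "L \<ge> 3" "\<And>t. f t \<in> V" "\<And>t. adj A (f t) (f (Suc t))"
    "\<And>s t. s < L \<Longrightarrow> t < L \<Longrightarrow> f s = f t \<Longrightarrow> s = t" "f 0 = x" "\<And>t. f (t + L) = f t"
    "C = {{f t, f (Suc t)} | t. t < L}"
proof -
  obtain vs where vs: "length vs \<ge> 3" "distinct vs" "set vs \<subseteq> V"
    "\<forall>i < length vs. adj A (vs ! i) (vs ! ((i + 1) mod length vs))"
    "C = {{vs ! i, vs ! ((i + 1) mod length vs)} | i. i < length vs}"
    using cyc unfolding is_cycle_def by blast
  define L where "L = length vs"
  have L0: "0 < L" using vs(1) unfolding L_def by linarith
  obtain i where i: "i < L" "x \<in> {vs ! i, vs ! ((i + 1) mod L)}"
    using on vs(5) unfolding on_cycle_def L_def by blast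
  obtain p where p: "p < L" "x = vs ! p"
  proof (cases "x = vs ! i")
    case True then show ?thesis using that i by blast
  next
    case False then have "x = vs ! ((i + 1) mod L)" using i by blast
    moreover have "(i + 1) mod L < L" using L0 by simp
    ultimately show ?thesis using that by blast
  qed
  define f where "f t = vs ! ((p + t) mod L)" for t
  have fV: "f t \<in> V" for t
  proof -
    have "(p + t) mod L < length vs" using L0 unfolding L_def by simp
    then show ?thesis using vs(3) unfolding f_def L_def by (meson nth_mem subsetD)
  qed
  have fadj: "adj A (f t) (f (Suc t))" for t
  proof -
    have "(p + t) mod L < length vs" using L0 unfolding L_def by simp
    then have "adj A (vs ! ((p + t) mod L)) (vs ! (((p + t) mod L + 1) mod L))"
      using vs(4) unfolding L_def by blast
    moreover have "((p + t) mod L + 1) mod L = (p + Suc t) mod L" by (simp add: mod_Suc_eq)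
    ultimately show ?thesis unfolding f_def by simp
  qed
  have finj: "s = t" if "s < L" "t < L" "f s = f t" for s t
  proof -
    have "(p + s) mod L < length vs" "(p + t) mod L < length vs" using L0 unfolding L_def by simp_all
    then have "(p + s) mod L = (p + t) mod L" using that(3) vs(2) unfolding f_def
      by (simp add: nth_eq_iff_index_eq)
    then show ?thesis using modinj that by blast
  qed
  have f0: "f 0 = x" using p unfolding f_def by simp
  have fper: "f (t + L) = f t" for t unfolding f_def by (simp add: add.assoc[symmetric])
  have C: "C = {{f t, f (Suc t)} | t. t < L}"
  proof
    show "C \<subseteq> {{f t, f (Suc t)} | t. t < L}"
    proof
      fix e assume "e \<in> C"
      then obtain j where j: "j < L" "e = {vs ! j, vs ! ((j + 1) mod L)}" using vs(5) unfolding L_def by blast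
      define t where "t = (j + L - p) mod L"
      have tL: "t < L" using L0 unfolding t_def by simp
      have pt: "(p + t) mod L = j"
      proof -
        have "(p + t) mod L = (p + (j + L - p)) mod L" unfolding t_def by (simp add: mod_add_right_eq)
        also have "p + (j + L - p) = j + L" using p by simp
        finally show ?thesis using j by simp
      qed
      have "f t = vs ! j" unfolding f_def pt ..
      moreover have "f (Suc t) = vs ! ((j + 1) mod L)"
        unfolding f_def using pt by (metis add_Suc_right mod_Suc_eq Suc_eq_plus1)
      ultimately have "e = {f t, f (Suc t)}" using j by simp
      then show "e \<in> {{f t, f (Suc t)} | t. t < L}" using tL by blast
    qed
    show "{{f t, f (Suc t)} | t. t < L} \<subseteq> C"
    proof
      fix e assume "e \<in> {{f t, f (Suc t)} | t. t < L}"
      then obtain t where t: "t < L" "e = {f t, f (Suc t)}" by blast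
      define j where "j = (p + t) mod L"
      have jL: "j < L" using L0 unfolding j_def by simp
      have "f (Suc t) = vs ! ((j + 1) mod L)" unfolding f_def j_def by (simp add: mod_Suc_eq)
      moreover have "f t = vs ! j" unfolding f_def j_def ..
      ultimately have "e = {vs ! j, vs ! ((j + 1) mod L)}" using t by simp
      then show "e \<in> C" using vs(5) jL unfolding L_def by blast
    qed
  qed
  show ?thesis using that[of L f] vs(1) fV fadj finj f0 fper C unfolding L_def by blast
qed


lemma cycle_nbrs:
  assumes og: "oriented_graph V A" and cyc: "is_cycle V A C" and on: "on_cycle x C"
  shows "\<exists>a b. a \<in> nbrs V A x \<and> b \<in> nbrs V A x \<and> a \<noteq> b \<and> (a,b) \<in> (ered (V - {x}) A)\<^sup>*"
proof -
  obtain L f where L: "L \<ge> 3" and fV: "\<And>t. f t \<in> V" and fadj: "\<And>t. adj A (f t) (f (Suc t))"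
    and finj: "\<And>s t. s < L \<Longrightarrow> t < L \<Longrightarrow> f s = f t \<Longrightarrow> s = t" and f0: "f 0 = x"
    and fper: "\<And>t. f (t + L) = f t" and "C = {{f t, f (Suc t)} | t. t < L}"
    by (rule cycle_seq[OF cyc on]) (rule that)
  have fx: "f t \<noteq> x" if "0 < t" "t < L" for t
  proof
    assume "f t = x"
    then have "f t = f 0" using f0 by simp
    then have "t = 0" using finj[of t 0] that L by simp
    then show False using that by simp
  qed
  have a: "f 1 \<in> nbrs V A x" using fadj[of 0] f0 fV unfolding nbrs_def by simp
  have "f L = x" using fper[of 0] f0 by simp
  moreover have "Suc (L - 1) = L" using L by simp
  ultimately have "adj A (f (L - 1)) x" using fadj[of "L - 1"] by simp
  then have "adj A x (f (L - 1))" unfolding adj_def by blast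
  then have b: "f (L - 1) \<in> nbrs V A x" using fV unfolding nbrs_def by simp
  have ab: "f 1 \<noteq> f (L - 1)"
  proof
    assume "f 1 = f (L - 1)"
    then have "1 = L - 1" using finj[of 1 "L - 1"] L by simp
    then show False using L by simp
  qed
  have path: "1 \<le> t \<longrightarrow> t \<le> L - 1 \<longrightarrow> (f 1, f t) \<in> (ered (V - {x}) A)\<^sup>*" for t
  proof (induction t)
    case 0 then show ?case by simp
  next
    case (Suc t)
    show ?case
    proof (intro impI)
      assume t: "1 \<le> Suc t" "Suc t \<le> L - 1"
      show "(f 1, f (Suc t)) \<in> (ered (V - {x}) A)\<^sup>*"
      proof (cases "t = 0")
        case True then show ?thesis by simp
      next
        case False
        then have IH: "(f 1, f t) \<in> (ered (V - {x}) A)\<^sup>*" using Suc t by simp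
        have "f t \<noteq> x" using fx[of t] False t by simp
        moreover have "f (Suc t) \<noteq> x" using fx[of "Suc t"] t by simp
        ultimately have "(f t, f (Suc t)) \<in> ered (V - {x}) A"
          using fV fadj unfolding ered_def by simp
        with IH show ?thesis by (rule rtrancl_into_rtrancl)
      qed
    qed
  qed
  have "(f 1, f (L - 1)) \<in> (ered (V - {x}) A)\<^sup>*" using path[of "L - 1"] L by simp
  then show ?thesis using a b ab by blast
qed

lemma cycle_drop:
  assumes og: "oriented_graph V A" and cyc: "is_cycle V A C" and on: "on_cycle x C"
  shows "card (cls (V - {x}) A ` nbrs V A x) < card (nbrs V A x)"
proof -
  obtain a b where ab: "a \<in> nbrs V A x" "b \<in> nbrs V A x" "a \<noteq> b" "(a,b) \<in> (ered (V - {x}) A)\<^sup>*"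
    using cycle_nbrs[OF og cyc on] by blast
  have fN: "finite (nbrs V A x)" by (rule nbrs_fin[OF og_fin[OF og]])
  have "cls (V - {x}) A a = cls (V - {x}) A b" by (rule cls_eq[OF ab(4)])
  then have "\<not> inj_on (cls (V - {x}) A) (nbrs V A x)"
    using ab(1,2,3) unfolding inj_on_def by blast
  then have "card (cls (V - {x}) A ` nbrs V A x) \<noteq> card (nbrs V A x)"
    by (simp add: inj_on_iff_eq_card[OF fN])
  then show ?thesis using card_image_le[OF fN, of "cls (V - {x}) A"] by linarith
qed

lemma noforest:
  assumes og: "oriented_graph V A" and W: "W \<subseteq> V" and ne: "W \<noteq> {}"
  and inj: "\<forall>x\<in>W. inj_on (cls (W - {x}) A) (nbrs W A x)"
  and deg: "\<forall>x\<in>W. 2 \<le> card (nbrs W A x)"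
  shows False
proof -
  have fW: "finite W" using og_fin[OF og] W finite_subset by blast
  define P where "P = {(x,a). x \<in> W \<and> a \<in> nbrs W A x}"
  define g where "g = (\<lambda>(x,a). card (cls (W - {x}) A a))"
  have fP: "finite P"
  proof (rule finite_subset[of _ "W \<times> W"])
    show "P \<subseteq> W \<times> W" unfolding P_def nbrs_def by auto
    show "finite (W \<times> W)" using fW by simp
  qed
  obtain x0 where x0: "x0 \<in> W" using ne by blast
  have "nbrs W A x0 \<noteq> {}" using deg x0 by fastforce
  then obtain a0 where "a0 \<in> nbrs W A x0" by blast
  then have Pne: "P \<noteq> {}" using x0 unfolding P_def by blast
  have "Min (g ` P) \<in> g ` P" using fP Pne by (intro Min_in) auto
  then obtain pr where pr: "pr \<in> P" "g pr = Min (g ` P)" by (metis imageE)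
  obtain x a where xa: "pr = (x,a)" by (cases pr)
  have xW: "x \<in> W" and aN: "a \<in> nbrs W A x" using pr xa unfolding P_def by auto
  have aW: "a \<in> W" and adjxa: "adj A x a" using aN unfolding nbrs_def by auto
  have ax: "a \<noteq> x"
  proof
    assume "a = x" then show False using adjxa noloop[OF og, of x] by simp
  qed
  have minp: "g (x,a) \<le> g q" if "q \<in> P" for q
  proof -
    have "g q \<in> g ` P" using that by blast
    then have "Min (g ` P) \<le> g q" by (rule Min_le[OF finite_imageI[OF fP]])
    then show ?thesis using pr xa by simp
  qed
  have "adj A a x" using adjxa unfolding adj_def by blast
  then have xNa: "x \<in> nbrs W A a" using xW unfolding nbrs_def by simp
  have fNa: "finite (nbrs W A a)" by (rule nbrs_fin[OF fW])
  have "2 \<le> card (nbrs W A a)" using deg aW by blast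
  then have "nbrs W A a - {x} \<noteq> {}"
  proof -
    assume c2: "2 \<le> card (nbrs W A a)"
    have "card (nbrs W A a - {x}) = card (nbrs W A a) - 1" using xNa fNa by simp
    then have "card (nbrs W A a - {x}) \<noteq> 0" using c2 by simp
    then show ?thesis by (metis card.empty)
  qed
  then obtain b where bN: "b \<in> nbrs W A a" and bx: "b \<noteq> x" by blast
  have bW: "b \<in> W" and adjab: "adj A a b" using bN unfolding nbrs_def by auto
  have ba: "b \<noteq> a"
  proof
    assume "b = a" then show False using adjab noloop[OF og, of a] by simp
  qed
  have "cls (W - {a}) A b \<noteq> cls (W - {a}) A x" using inj aW bN xNa bx unfolding inj_on_def by blast
  then have nbx: "(b,x) \<notin> (ered (W - {a}) A)\<^sup>*" using cls_eq by metis
  define D where "D = cls (W - {x}) A a"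
  define D' where "D' = cls (W - {a}) A b"
  have sub: "D' \<subseteq> D"
  proof
    fix z assume "z \<in> D'"
    then have bz: "(b,z) \<in> (ered (W - {a}) A)\<^sup>*" unfolding D'_def cls_def by simp
    have "\<forall>w. (b,w) \<in> (ered (W - {a}) A)\<^sup>* \<longrightarrow> w \<noteq> x" using nbx by blast
    then have "(b,z) \<in> (ered (W - {a} - {x}) A)\<^sup>*" by (rule path_avoid[OF bz])
    moreover have "(ered (W - {a} - {x}) A)\<^sup>* \<subseteq> (ered (W - {x}) A)\<^sup>*" by (rule ered_mono) blast
    ultimately have bz': "(b,z) \<in> (ered (W - {x}) A)\<^sup>*" by blast
    have "(a,b) \<in> ered (W - {x}) A" using aW bW ax bx adjab unfolding ered_def by simp
    then have "(a,z) \<in> (ered (W - {x}) A)\<^sup>*" using bz' by (rule converse_rtrancl_into_rtrancl)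
    then show "z \<in> D" unfolding D_def cls_def by simp
  qed
  have "a \<in> D" unfolding D_def by (rule cls_refl)
  moreover have "a \<notin> D'"
  proof
    assume "a \<in> D'"
    then have "(b,a) \<in> (ered (W - {a}) A)\<^sup>*" unfolding D'_def cls_def by simp
    then have "a \<in> W - {a}" using rt_in ba by metis
    then show False by simp
  qed
  ultimately have psub: "D' \<subset> D" using sub by blast
  have fD: "finite D" unfolding D_def using cls_sub[of a "W - {x}" A] aW ax fW finite_subset
    by (metis Diff_iff finite_Diff singletonD)
  have "card D' < card D" by (rule psubset_card_mono[OF fD psub])
  moreover have "(a,b) \<in> P" using aW bN unfolding P_def by simp
  then have "g (x,a) \<le> g (a,b)" by (rule minp)
  then have "card D \<le> card D'" unfolding g_def D_def D'_def by simp
  ultimately show False by simp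
qed


lemma indep_fin: "finite W \<Longrightarrow> finite {S. independent_set W A S}"
  by (rule finite_subset[of _ "Pow W"]) (auto simp: independent_set_def)

lemma indep_empty: "independent_set W A {}" unfolding independent_set_def by simp

lemma al_ge: "finite W \<Longrightarrow> independent_set W A S \<Longrightarrow> card S \<le> independence_number W A"
  unfolding independence_number_def by (rule Max_ge) (auto intro: indep_fin)

lemma al_obtain: assumes "finite W"
  obtains S where "independent_set W A S" "card S = independence_number W A"
proof -
  have "independence_number W A \<in> card ` {S. independent_set W A S}"
    unfolding independence_number_def
    by (rule Max_in) (use indep_fin[OF assms] indep_empty in auto)
  then show ?thesis using that by auto
qed

lemma al_mono: assumes fW: "finite W" shows "independence_number (W - X) A \<le> independence_number W A"
proof -
  obtain S where S: "independent_set (W - X) A S" "card S = independence_number (W - X) A"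
    using al_obtain fW by (metis finite_Diff)
  have "independent_set W A S" using S(1) unfolding independent_set_def by blast
  then show ?thesis using al_ge[OF fW] S(2) by metis
qed

lemma al_add:
  assumes og: "oriented_graph V A" and fW: "finite W" and u: "u \<in> W" "u \<in> Z"
  and na: "\<forall>v\<in>W - Z. \<not> adj A u v"
  shows "independence_number (W - Z) A + 1 \<le> independence_number W A"
proof -
  obtain S where S: "independent_set (W - Z) A S" "card S = independence_number (W - Z) A"
    using al_obtain fW by (metis finite_Diff)
  have SW: "S \<subseteq> W - Z" using S(1) unfolding independent_set_def by simp
  have fS: "finite S" using SW fW finite_subset by blast
  have uS: "u \<notin> S" using SW u by blast
  have "independent_set W A (insert u S)"
    unfolding independent_set_def
  proof (intro conjI ballI)
    show "insert u S \<subseteq> W" using SW u by blast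
    fix p q assume p: "p \<in> insert u S" and q: "q \<in> insert u S"
    show "\<not> adj A p q"
    proof (cases "p = u")
      case True
      show ?thesis
      proof (cases "q = u")
        case True then show ?thesis using \<open>p = u\<close> noloop[OF og] by simp
      next
        case False then have "q \<in> W - Z" using q SW by blast
        then show ?thesis using na \<open>p = u\<close> by simp
      qed
    next
      case False
      then have pS: "p \<in> S" using p by simp
      show ?thesis
      proof (cases "q = u")
        case True
        have "p \<in> W - Z" using pS SW by blast
        then have "\<not> adj A u p" using na by simp
        then show ?thesis using True unfolding adj_def by blast
      next
        case False then have "q \<in> S" using q by simp
        then show ?thesis using pS S(1) unfolding independent_set_def by blast
      qed
    qed
  qed
  then have "card (insert u S) \<le> independence_number W A" by (rule al_ge[OF fW])
  then show ?thesis using S(2) fS uS by simp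
qed

lemma se_zero: "skew_entry A i j = 0 \<longleftrightarrow> \<not> adj A i j"
  unfolding skew_entry_def adj_def by simp


lemma main_ineq:
  assumes og: "oriented_graph V A"
  shows "W \<subseteq> V \<Longrightarrow> 2 * int (card W) - 2 * dd W A \<le>
           int (crk (skew_entry A) W) + 2 * int (independence_number W A)"
proof (induction "card W" arbitrary: W rule: less_induct)
  case less
  note W = less.prems
  let ?s = "skew_entry A"
  have fW: "finite W" using og_fin[OF og] W finite_subset by blast
  have dd0: "0 \<le> dd W A" by (rule dd_nonneg[OF og W])
  show ?case
  proof (cases "W = {}")
    case True then show ?thesis using dd0 by simp
  next
    case ne: False
    show ?thesis
    proof (cases "\<exists>x\<in>W. \<not> inj_on (cls (W - {x}) A) (nbrs W A x)")
      case True
      then obtain x where x: "x \<in> W" "\<not> inj_on (cls (W - {x}) A) (nbrs W A x)" by blast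
      have fN: "finite (nbrs W A x)" by (rule nbrs_fin[OF fW])
      have "card (cls (W - {x}) A ` nbrs W A x) \<noteq> card (nbrs W A x)"
        using x(2) by (simp add: inj_on_iff_eq_card[OF fN])
      then have lt: "card (cls (W - {x}) A ` nbrs W A x) < card (nbrs W A x)"
        using card_image_le[OF fN, of "cls (W - {x}) A"] by linarith
      have d: "dd W A \<ge> dd (W - {x}) A + 1" using dd_drop[OF og W x(1)] lt by linarith
      have c: "card W = card (W - {x}) + 1" using card_Suc_Diff1[OF fW x(1)] by simp
      have IH: "2 * int (card (W - {x})) - 2 * dd (W - {x}) A \<le>
           int (crk ?s (W - {x})) + 2 * int (independence_number (W - {x}) A)"
        by (rule less.hyps) (use c W in auto)
      have r: "crk ?s (W - {x}) \<le> crk ?s W" by (rule crk_del_le[OF fW])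
      have a: "independence_number (W - {x}) A \<le> independence_number W A" by (rule al_mono[OF fW])
      show ?thesis using IH d c r a by linarith
    next
      case inj: False
      show ?thesis
      proof (cases "\<exists>y\<in>W. nbrs W A y = {}")
        case True
        then obtain y where y: "y \<in> W" "nbrs W A y = {}" by blast
        have d: "dd W A = dd (W - {y}) A" using dd_drop[OF og W y(1)] y(2) by simp
        have c: "card W = card (W - {y}) + 1" using card_Suc_Diff1[OF fW y(1)] by simp
        have IH: "2 * int (card (W - {y})) - 2 * dd (W - {y}) A \<le>
             int (crk ?s (W - {y})) + 2 * int (independence_number (W - {y}) A)"
          by (rule less.hyps) (use c W in auto)
        have nadj: "\<not> adj A y j" if "j \<in> W" for j
        proof -
          have "j \<notin> nbrs W A y" using y(2) by simp
          then show ?thesis using that unfolding nbrs_def by simp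
        qed
        have r: "crk ?s W \<le> crk ?s (W - {y})"
        proof (rule crk_iso[OF fW y(1)])
          show "\<forall>j\<in>W. ?s y j = 0" using nadj by (simp add: se_zero)
          show "\<forall>i\<in>W. ?s i y = 0"
          proof
            fix i assume "i \<in> W"
            then have "\<not> adj A y i" by (rule nadj)
            then have "\<not> adj A i y" unfolding adj_def by blast
            then show "?s i y = 0" by (simp add: se_zero)
          qed
        qed
        have r2: "crk ?s (W - {y}) \<le> crk ?s W" by (rule crk_del_le[OF fW])
        have a: "independence_number (W - {y}) A + 1 \<le> independence_number W A"
          by (rule al_add[OF og fW y(1)]) (simp, use nadj in blast)
        show ?thesis using IH d c r r2 a by linarith
      next
        case noiso: False
        show ?thesis
        proof (cases "\<exists>u\<in>W. card (nbrs W A u) = 1")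
          case True
          then obtain u where u: "u \<in> W" "card (nbrs W A u) = 1" by blast
          then obtain v where v: "nbrs W A u = {v}" by (metis card_1_singletonE)
          have vW: "v \<in> W" and auv: "adj A u v" using v unfolding nbrs_def by auto
          have uv: "u \<noteq> v"
          proof
            assume "u = v" then show False using auv noloop[OF og, of u] by simp
          qed
          have nadj: "\<not> adj A u j" if "j \<in> W" "j \<noteq> v" for j
          proof
            assume "adj A u j"
            then have "j \<in> nbrs W A u" using that unfolding nbrs_def by simp
            then show False using v that by simp
          qed
          have W1: "W - {u} \<subseteq> V" using W by blast
          have eq: "W - {u} - {v} = W - {u,v}" by blast
          have d: "dd (W - {u,v}) A \<le> dd W A"
            using dd_mono[OF og W1, of v] dd_mono[OF og W, of u] eq by simp
          have c: "card W = card (W - {u,v}) + 2"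
          proof -
            have "card W = card (W - {u}) + 1" using card_Suc_Diff1[OF fW u(1)] by simp
            moreover have "card (W - {u}) = card (W - {u} - {v}) + 1"
              using card_Suc_Diff1[of "W - {u}" v] fW vW uv by simp
            ultimately show ?thesis using eq by simp
          qed
          have IH: "2 * int (card (W - {u,v})) - 2 * dd (W - {u,v}) A \<le>
               int (crk ?s (W - {u,v})) + 2 * int (independence_number (W - {u,v}) A)"
            by (rule less.hyps) (use c W in auto)
          have r: "crk ?s (W - {u, v}) + 2 \<le> crk ?s W"
          proof (rule crk_pend[OF fW u(1) vW uv])
            show "?s u v \<noteq> 0" using auv by (simp add: se_zero)
            have "adj A v u" using auv unfolding adj_def by blast
            then show "?s v u \<noteq> 0" by (simp add: se_zero)
            show "\<forall>j\<in>W - {v}. ?s u j = 0" using nadj by (simp add: se_zero)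
            show "\<forall>i\<in>W - {v}. ?s i u = 0"
            proof
              fix i assume "i \<in> W - {v}"
              then have "\<not> adj A u i" using nadj by blast
              then have "\<not> adj A i u" unfolding adj_def by blast
              then show "?s i u = 0" by (simp add: se_zero)
            qed
          qed
          have a: "independence_number (W - {u,v}) A + 1 \<le> independence_number W A"
            by (rule al_add[OF og fW u(1)]) (simp, use nadj in blast)
          show ?thesis using IH d c r a by linarith
        next
          case False
          have "\<forall>x\<in>W. 2 \<le> card (nbrs W A x)"
          proof
            fix x assume x: "x \<in> W"
            have "nbrs W A x \<noteq> {}" using noiso x by blast
            then have "card (nbrs W A x) \<noteq> 0" using nbrs_fin[OF fW] by simp
            moreover have "card (nbrs W A x) \<noteq> 1" using False x by blast
            ultimately show "2 \<le> card (nbrs W A x)" by linarith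
          qed
          then show ?thesis using noforest[OF og W ne] inj by blast
        qed
      qed
    qed
  qed
qed


definition cycseq :: "'a set \<Rightarrow> ('a \<times> 'a) set \<Rightarrow> nat \<Rightarrow> (nat \<Rightarrow> 'a) \<Rightarrow> bool" where
  "cycseq V A L f \<longleftrightarrow> L \<ge> 3 \<and> (\<forall>t. f t \<in> V) \<and> (\<forall>t. adj A (f t) (f (Suc t))) \<and>
     (\<forall>s t. s < L \<longrightarrow> t < L \<longrightarrow> f s = f t \<longrightarrow> s = t) \<and> (\<forall>t. f (t + L) = f t)"

lemma cycle_seq2:
  assumes cyc: "is_cycle V A C" and on: "on_cycle x C"
  shows "\<exists>L f. cycseq V A L f \<and> f 0 = x \<and> C = {{f t, f (Suc t)} | t. t < L}"
proof -
  obtain L f where L: "L \<ge> 3" and fV: "\<And>t. f t \<in> V" and fadj: "\<And>t. adj A (f t) (f (Suc t))"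
    and finj: "\<And>s t. s < L \<Longrightarrow> t < L \<Longrightarrow> f s = f t \<Longrightarrow> s = t" and f0: "f 0 = x"
    and fper: "\<And>t. f (t + L) = f t" and C: "C = {{f t, f (Suc t)} | t. t < L}"
    by (rule cycle_seq[OF cyc on]) (rule that)
  have "cycseq V A L f" unfolding cycseq_def using L fV fadj finj fper by blast
  then show ?thesis using f0 C by blast
qed

lemma cs_per_mult: "cycseq V A L f \<Longrightarrow> f (a + k * L) = f a"
proof (induction k)
  case 0 then show ?case by simp
next
  case (Suc k)
  have "f (a + Suc k * L) = f ((a + k * L) + L)" by (simp add: algebra_simps)
  also have "\<dots> = f (a + k * L)" using Suc.prems unfolding cycseq_def by blast
  finally show ?case using Suc by simp
qed

lemma cs_mod: assumes "cycseq V A L f" shows "f t = f (t mod L)"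
proof -
  have "t = t mod L + (t div L) * L" by simp
  then have "f t = f (t mod L + (t div L) * L)" by simp
  also have "\<dots> = f (t mod L)" by (rule cs_per_mult[OF assms])
  finally show ?thesis .
qed

lemma cs_L0: "cycseq V A L f \<Longrightarrow> 0 < L" unfolding cycseq_def by linarith

lemma cs_shift: assumes cs: "cycseq V A L f" shows "cycseq V A L (\<lambda>u. f (s + u))"
proof -
  have L0: "0 < L" by (rule cs_L0[OF cs])
  have inj: "u1 = u2" if "u1 < L" "u2 < L" "f (s + u1) = f (s + u2)" for u1 u2
  proof -
    have "f ((s + u1) mod L) = f ((s + u2) mod L)" using that(3) cs_mod[OF cs] by metis
    moreover have "(s + u1) mod L < L" "(s + u2) mod L < L" using L0 by simp_all
    ultimately have "(s + u1) mod L = (s + u2) mod L" using cs unfolding cycseq_def by blast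
    then show ?thesis using modinj that(1,2) by blast
  qed
  have per: "f (s + (u + L)) = f (s + u)" for u
  proof -
    have "f (s + (u + L)) = f ((s + u) + L)" by (simp add: add.assoc)
    then show ?thesis using cs unfolding cycseq_def by simp
  qed
  show ?thesis unfolding cycseq_def using cs inj per unfolding cycseq_def by auto
qed

lemma seq_nbrs:
  assumes cs: "cycseq V A L f"
  shows "f 1 \<in> nbrs V A (f 0) \<and> f (L - 1) \<in> nbrs V A (f 0) \<and> f 1 \<noteq> f (L - 1) \<and>
         (f 1, f (L - 1)) \<in> (ered (V - {f 0}) A)\<^sup>*"
proof -
  have L: "L \<ge> 3" and fV: "\<And>t. f t \<in> V" and fadj: "\<And>t. adj A (f t) (f (Suc t))"
    and finj: "\<And>s t. s < L \<Longrightarrow> t < L \<Longrightarrow> f s = f t \<Longrightarrow> s = t"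
    and fper: "\<And>t. f (t + L) = f t"
    using cs unfolding cycseq_def by blast+
  define x where "x = f 0"
  have fx: "f t \<noteq> x" if "0 < t" "t < L" for t
  proof
    assume "f t = x"
    then have "f t = f 0" unfolding x_def by simp
    then have "t = 0" using finj[of t 0] that L by simp
    then show False using that by simp
  qed
  have a: "f 1 \<in> nbrs V A x" using fadj[of 0] fV unfolding nbrs_def x_def by simp
  have "f L = x" using fper[of 0] unfolding x_def by simp
  moreover have "Suc (L - 1) = L" using L by simp
  ultimately have "adj A (f (L - 1)) x" using fadj[of "L - 1"] by simp
  then have "adj A x (f (L - 1))" unfolding adj_def by blast
  then have b: "f (L - 1) \<in> nbrs V A x" using fV unfolding nbrs_def by simp
  have ab: "f 1 \<noteq> f (L - 1)"
  proof
    assume "f 1 = f (L - 1)"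
    then have "1 = L - 1" using finj[of 1 "L - 1"] L by simp
    then show False using L by simp
  qed
  have path: "1 \<le> t \<longrightarrow> t \<le> L - 1 \<longrightarrow> (f 1, f t) \<in> (ered (V - {x}) A)\<^sup>*" for t
  proof (induction t)
    case 0 then show ?case by simp
  next
    case (Suc t)
    show ?case
    proof (intro impI)
      assume t: "1 \<le> Suc t" "Suc t \<le> L - 1"
      show "(f 1, f (Suc t)) \<in> (ered (V - {x}) A)\<^sup>*"
      proof (cases "t = 0")
        case True then show ?thesis by simp
      next
        case False
        then have IH: "(f 1, f t) \<in> (ered (V - {x}) A)\<^sup>*" using Suc t by simp
        have "f t \<noteq> x" using fx[of t] False t by simp
        moreover have "f (Suc t) \<noteq> x" using fx[of "Suc t"] t by simp
        ultimately have "(f t, f (Suc t)) \<in> ered (V - {x}) A"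
          using fV fadj unfolding ered_def by simp
        with IH show ?thesis by (rule rtrancl_into_rtrancl)
      qed
    qed
  qed
  have "(f 1, f (L - 1)) \<in> (ered (V - {x}) A)\<^sup>*" using path[of "L - 1"] L by simp
  then show ?thesis using a b ab unfolding x_def by blast
qed

lemma edge_any:
  assumes cs: "cycseq V A L f" and C: "C = {{f t, f (Suc t)} | t. t < L}"
  shows "{f s, f (Suc s)} \<in> C"
proof -
  have L0: "0 < L" by (rule cs_L0[OF cs])
  have 1: "f s = f (s mod L)" by (rule cs_mod[OF cs])
  have "f (Suc s) = f (Suc s mod L)" by (rule cs_mod[OF cs])
  also have "Suc s mod L = Suc (s mod L) mod L" by (simp add: mod_Suc_eq)
  also have "f (Suc (s mod L) mod L) = f (Suc (s mod L))" by (rule cs_mod[OF cs, symmetric])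
  finally have 2: "f (Suc s) = f (Suc (s mod L))" .
  have "s mod L < L" using L0 by simp
  then show ?thesis unfolding C 1 2 by blast
qed

lemma vert_any:
  assumes C: "C = {{f t, f (Suc t)} | t. t < L}" and z: "z \<in> \<Union>C"
  shows "\<exists>s. z = f s"
proof -
  obtain t where "z \<in> {f t, f (Suc t)}" using z C by blast
  then show ?thesis by blast
qed

lemma card_img2:
  assumes fN: "finite N" and abcd: "a \<in> N" "b \<in> N" "c \<in> N" "d \<in> N"
  and ab: "a \<noteq> b" "g a = g b" and cd: "c \<noteq> d" "g c = g d" and ne: "{a,b} \<noteq> {c,d}"
  shows "card (g ` N) + 2 \<le> card N"
proof -
  define N1 where "N1 = N - {b}"
  have i1: "g ` N1 = g ` N"
  proof
    show "g ` N1 \<subseteq> g ` N" unfolding N1_def by blast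
    show "g ` N \<subseteq> g ` N1"
    proof
      fix y assume "y \<in> g ` N"
      then obtain w where w: "w \<in> N" "y = g w" by blast
      show "y \<in> g ` N1"
      proof (cases "w = b")
        case True then have "y = g a" using w ab by simp
        moreover have "a \<in> N1" using abcd ab unfolding N1_def by simp
        ultimately show ?thesis by blast
      next
        case False then show ?thesis using w unfolding N1_def by blast
      qed
    qed
  qed
  obtain e e' where ee: "e \<in> N1" "e' \<in> N1" "e \<noteq> e'" "g e = g e'"
  proof (cases "b = c")
    case True
    then have "d \<noteq> a" using ne by auto
    moreover have "d \<noteq> b" using cd True by simp
    ultimately show ?thesis using that[of a d] abcd ab cd True unfolding N1_def by auto
  next
    case bc: False
    show ?thesis
    proof (cases "b = d")
      case True
      then have "c \<noteq> a" using ne by auto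
      moreover have "c \<noteq> b" using cd True by simp
      ultimately show ?thesis using that[of a c] abcd ab cd True unfolding N1_def by auto
    next
      case False
      then show ?thesis using that[of c d] abcd cd bc unfolding N1_def by auto
    qed
  qed
  define N2 where "N2 = N1 - {e'}"
  have i2: "g ` N2 = g ` N1"
  proof
    show "g ` N2 \<subseteq> g ` N1" unfolding N2_def by blast
    show "g ` N1 \<subseteq> g ` N2"
    proof
      fix y assume "y \<in> g ` N1"
      then obtain w where w: "w \<in> N1" "y = g w" by blast
      show "y \<in> g ` N2"
      proof (cases "w = e'")
        case True then have "y = g e" using w ee by simp
        moreover have "e \<in> N2" using ee unfolding N2_def by simp
        ultimately show ?thesis by blast
      next
        case False then show ?thesis using w unfolding N2_def by blast
      qed
    qed
  qed
  have fN2: "finite N2" using fN unfolding N2_def N1_def by simp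
  have c1: "card N = card N1 + 1" using card_Suc_Diff1[OF fN abcd(2)] unfolding N1_def by simp
  have c2: "card N1 = card N2 + 1" using card_Suc_Diff1[of N1 e'] fN ee(2) unfolding N2_def N1_def by simp
  have "card (g ` N2) \<le> card N2" by (rule card_image_le[OF fN2])
  then show ?thesis using i1 i2 c1 c2 by simp
qed


lemma crk_cong: assumes st: "\<forall>i\<in>W. \<forall>j\<in>W. s i j = t i j" shows "crk s W = crk t W"
proof -
  have "cindep s W J = cindep t W J" if J: "J \<subseteq> W" for J
  proof -
    have "(\<Sum>j\<in>J. c j * s i j) = (\<Sum>j\<in>J. c j * t i j)" if "i \<in> W" for i c
      by (rule sum.cong) (use st that J in auto)
    then show ?thesis unfolding cindep_def by (metis (no_types))
  qed
  then have "{J. J \<subseteq> W \<and> cindep s W J} = {J. J \<subseteq> W \<and> cindep t W J}" by blast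
  then show ?thesis unfolding crk_def by simp
qed

lemma del_adj: "u \<noteq> x \<Longrightarrow> v \<noteq> x \<Longrightarrow> adj (del_vertex_A A x) u v = adj A u v"
  unfolding adj_def del_vertex_A_def by auto

lemma del_se: "u \<noteq> x \<Longrightarrow> v \<noteq> x \<Longrightarrow> skew_entry (del_vertex_A A x) u v = skew_entry A u v"
  unfolding skew_entry_def del_vertex_A_def by auto

lemma tr_srV: "oriented_graph V A \<Longrightarrow> skew_rank V A = crk (skew_entry A) V"
  using skew_rank_crk og_fin by blast

lemma tr_sr: assumes og: "oriented_graph V A"
  shows "skew_rank (V - {x}) (del_vertex_A A x) = crk (skew_entry A) (V - {x})"
proof -
  have "skew_rank (V - {x}) (del_vertex_A A x) = crk (skew_entry (del_vertex_A A x)) (V - {x})"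
    using skew_rank_crk og_fin[OF og] by blast
  also have "\<dots> = crk (skew_entry A) (V - {x})" by (rule crk_cong) (simp add: del_se)
  finally show ?thesis .
qed

lemma tr_al: "independence_number (V - {x}) (del_vertex_A A x) = independence_number (V - {x}) A"
proof -
  have "independent_set (V - {x}) (del_vertex_A A x) S = independent_set (V - {x}) A S" for S
  proof (cases "S \<subseteq> V - {x}")
    case True
    have "\<forall>u\<in>S. \<forall>v\<in>S. adj (del_vertex_A A x) u v = adj A u v"
    proof (intro ballI)
      fix u v assume "u \<in> S" "v \<in> S"
      then have "u \<noteq> x" "v \<noteq> x" using True by auto
      then show "adj (del_vertex_A A x) u v = adj A u v" by (rule del_adj)
    qed
    then show ?thesis unfolding independent_set_def by simp
  next
    case False then show ?thesis unfolding independent_set_def by simp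
  qed
  then have "independent_set (V - {x}) (del_vertex_A A x) = independent_set (V - {x}) A" by (rule ext)
  then show ?thesis unfolding independence_number_def by simp
qed

lemma tr_om: "omega (V - {x}) (del_vertex_A A x) = omega (V - {x}) A"
proof -
  have "{(u,v). u \<in> V - {x} \<and> v \<in> V - {x} \<and> adj (del_vertex_A A x) u v} =
        {(u,v). u \<in> V - {x} \<and> v \<in> V - {x} \<and> adj A u v}" by (auto simp: del_adj)
  then show ?thesis unfolding omega_def components_rel_def by simp
qed

lemma tr_edges: assumes og: "oriented_graph V A"
  shows "edges (del_vertex_A A x) = {e \<in> edges A. e \<subseteq> V - {x}}"
proof
  show "edges (del_vertex_A A x) \<subseteq> {e \<in> edges A. e \<subseteq> V - {x}}"
  proof
    fix e assume "e \<in> edges (del_vertex_A A x)"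
    then obtain u v where uv: "(u,v) \<in> A" "u \<noteq> x" "v \<noteq> x" "e = {u,v}"
      unfolding edges_def del_vertex_A_def by blast
    have "u \<in> V" "v \<in> V" using uv(1) og_sub[OF og] by auto
    then show "e \<in> {e \<in> edges A. e \<subseteq> V - {x}}" using uv unfolding edges_def by blast
  qed
  show "{e \<in> edges A. e \<subseteq> V - {x}} \<subseteq> edges (del_vertex_A A x)"
  proof
    fix e assume "e \<in> {e \<in> edges A. e \<subseteq> V - {x}}"
    then obtain u v where uv: "(u,v) \<in> A" "e = {u,v}" "e \<subseteq> V - {x}" unfolding edges_def by blast
    then have "(u,v) \<in> del_vertex_A A x" unfolding del_vertex_A_def by auto
    then show "e \<in> edges (del_vertex_A A x)" using uv unfolding edges_def by blast
  qed
qed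

lemma tr_dd: assumes og: "oriented_graph V A" shows "dim_d (V - {x}) (del_vertex_A A x) = dd (V - {x}) A"
proof -
  have "edges (del_vertex_A A x) = {e \<in> edges A. e \<subseteq> V - {x}}" by (rule tr_edges[OF og])
  then show ?thesis unfolding dim_d_def dd_def mm_def tr_om by simp
qed

lemma tr_ddV: assumes og: "oriented_graph V A" shows "dim_d V A = dd V A"
proof -
  have "{e \<in> edges A. e \<subseteq> V} = edges A" using og_sub[OF og] unfolding edges_def by blast
  then show ?thesis unfolding dim_d_def dd_def mm_def by simp
qed

lemma cyc_vertex:
  assumes og: "oriented_graph V A" and lo: "lower_optimal V A"
  and cyc: "is_cycle V A C" and on: "on_cycle z C"
  shows "crk (skew_entry A) (V - {z}) = crk (skew_entry A) V \<and>
         independence_number (V - {z}) A = independence_number V A \<and>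
         dd V A = dd (V - {z}) A + 1 \<and>
         card (cls (V - {z}) A ` nbrs V A z) + 1 = card (nbrs V A z)"
proof -
  let ?s = "skew_entry A"
  have fV: "finite V" by (rule og_fin[OF og])
  obtain L f where "cycseq V A L f" "f 0 = z" using cycle_seq2[OF cyc on] by blast
  then have zV: "z \<in> V" unfolding cycseq_def by blast
  have LO: "int (crk ?s V) + 2 * int (independence_number V A) = 2 * int (card V) - 2 * dd V A"
    using lo unfolding lower_optimal_def tr_srV[OF og] tr_ddV[OF og] .
  have MI: "2 * int (card (V - {z})) - 2 * dd (V - {z}) A \<le>
           int (crk ?s (V - {z})) + 2 * int (independence_number (V - {z}) A)"
    by (rule main_ineq[OF og]) blast
  have lt: "card (cls (V - {z}) A ` nbrs V A z) < card (nbrs V A z)" by (rule cycle_drop[OF og cyc on])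
  have dr: "dd V A = dd (V - {z}) A + int (card (nbrs V A z)) - int (card (cls (V - {z}) A ` nbrs V A z))"
    by (rule dd_drop[OF og _ zV]) simp
  have c: "card V = card (V - {z}) + 1" using card_Suc_Diff1[OF fV zV] by simp
  have r: "crk ?s (V - {z}) \<le> crk ?s V" by (rule crk_del_le[OF fV])
  have a: "independence_number (V - {z}) A \<le> independence_number V A" by (rule al_mono[OF fV])
  show ?thesis using LO MI lt dr c r a by linarith
qed

lemma pair_unique:
  assumes og: "oriented_graph V A" and lo: "lower_optimal V A"
  and cyc: "is_cycle V A C" and on: "on_cycle z C"
  and abcd: "a \<in> nbrs V A z" "b \<in> nbrs V A z" "c \<in> nbrs V A z" "d \<in> nbrs V A z"
  and ab: "a \<noteq> b" "(a,b) \<in> (ered (V - {z}) A)\<^sup>*"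
  and cd: "c \<noteq> d" "(c,d) \<in> (ered (V - {z}) A)\<^sup>*"
  shows "{a,b} = {c,d}"
proof (rule ccontr)
  assume ne: "{a,b} \<noteq> {c,d}"
  have fN: "finite (nbrs V A z)" by (rule nbrs_fin[OF og_fin[OF og]])
  have "card (cls (V - {z}) A ` nbrs V A z) + 2 \<le> card (nbrs V A z)"
    by (rule card_img2[OF fN abcd ab(1) cls_eq[OF ab(2)] cd(1) cls_eq[OF cd(2)] ne])
  then show False using cyc_vertex[OF og lo cyc on] by linarith
qed

lemma cycle_sub:
  assumes og: "oriented_graph V A" and lo: "lower_optimal V A"
  and c1: "is_cycle V A C1" "on_cycle x C1" and c2: "is_cycle V A C2" "on_cycle x C2"
  shows "C2 \<subseteq> C1"
proof -
  obtain L1 f1 where f1: "cycseq V A L1 f1" "f1 0 = x" "C1 = {{f1 t, f1 (Suc t)} | t. t < L1}"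
    using cycle_seq2[OF c1] by blast
  obtain L2 f2 where f2: "cycseq V A L2 f2" "f2 0 = x" "C2 = {{f2 t, f2 (Suc t)} | t. t < L2}"
    using cycle_seq2[OF c2] by blast
  have key: "{f2 t, f2 (Suc t)} \<in> C1" if zin: "f2 t \<in> \<Union>C1" for t
  proof -
    obtain s where s: "f2 t = f1 s" using vert_any[OF f1(3) zin] by blast
    have onz: "on_cycle (f1 s) C1" using zin s unfolding on_cycle_def by simp
    have g1: "cycseq V A L1 (\<lambda>u. f1 (s + u))" by (rule cs_shift[OF f1(1)])
    have g2: "cycseq V A L2 (\<lambda>u. f2 (t + u))" by (rule cs_shift[OF f2(1)])
    have n1: "f1 (s + 1) \<in> nbrs V A (f1 s) \<and> f1 (s + (L1 - 1)) \<in> nbrs V A (f1 s) \<and>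
              f1 (s + 1) \<noteq> f1 (s + (L1 - 1)) \<and> (f1 (s + 1), f1 (s + (L1 - 1))) \<in> (ered (V - {f1 s}) A)\<^sup>*"
      using seq_nbrs[OF g1] by simp
    have n2: "f2 (t + 1) \<in> nbrs V A (f1 s) \<and> f2 (t + (L2 - 1)) \<in> nbrs V A (f1 s) \<and>
              f2 (t + 1) \<noteq> f2 (t + (L2 - 1)) \<and> (f2 (t + 1), f2 (t + (L2 - 1))) \<in> (ered (V - {f1 s}) A)\<^sup>*"
      using seq_nbrs[OF g2] s by simp
    have eq: "{f1 (s + 1), f1 (s + (L1 - 1))} = {f2 (t + 1), f2 (t + (L2 - 1))}"
      using pair_unique[OF og lo c1(1) onz] n1 n2 by blast
    then have "f2 (t + 1) = f1 (s + 1) \<or> f2 (t + 1) = f1 (s + (L1 - 1))" by (metis insertI1 insert_iff singletonD)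
    then show ?thesis
    proof
      assume "f2 (t + 1) = f1 (s + 1)"
      then have "{f2 t, f2 (Suc t)} = {f1 s, f1 (Suc s)}" using s by simp
      then show ?thesis using edge_any[OF f1(1) f1(3)] by simp
    next
      assume h: "f2 (t + 1) = f1 (s + (L1 - 1))"
      have L1: "L1 \<ge> 3" using f1(1) unfolding cycseq_def by blast
      have "Suc (s + (L1 - 1)) = s + L1" using L1 by simp
      moreover have "f1 (s + L1) = f1 s" using f1(1) unfolding cycseq_def by blast
      ultimately have "f1 (Suc (s + (L1 - 1))) = f1 s" by simp
      then have "{f2 t, f2 (Suc t)} = {f1 (s + (L1 - 1)), f1 (Suc (s + (L1 - 1)))}"
        using s h by auto
      then show ?thesis using edge_any[OF f1(1) f1(3)] by simp
    qed
  qed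
  have allin: "f2 t \<in> \<Union>C1" for t
  proof (induction t)
    case 0 then show ?case using f2(2) c1(2) unfolding on_cycle_def by simp
  next
    case (Suc t)
    then have "{f2 t, f2 (Suc t)} \<in> C1" by (rule key)
    then show ?case by blast
  qed
  show ?thesis
  proof
    fix e assume "e \<in> C2"
    then obtain t where "e = {f2 t, f2 (Suc t)}" using f2(3) by blast
    then show "e \<in> C1" using key[OF allin] by simp
  qed
qed


theorem lemma2p2:
  fixes V :: "'a set" and A :: "('a \<times> 'a) set" and x :: 'a
  assumes "oriented_graph V A"
    and "lower_optimal V A"
    and "x \<in> V"
    and "\<exists>C. is_cycle V A C \<and> on_cycle x C"
  shows "skew_rank V A = skew_rank (del_vertex_V V x) (del_vertex_A A x) \<and>
         independence_number V A = independence_number (del_vertex_V V x) (del_vertex_A A x) \<and>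
         dim_d V A = dim_d (del_vertex_V V x) (del_vertex_A A x) + 1 \<and>
         lower_optimal (del_vertex_V V x) (del_vertex_A A x) \<and>
         card {C. is_cycle V A C \<and> on_cycle x C} = 1 \<and> \<not> quasi_pendant V A x"
proof -
  note og = assms(1) and lo = assms(2) and xV = assms(3)
  let ?s = "skew_entry A"
  obtain C0 where C0: "is_cycle V A C0" "on_cycle x C0" using assms(4) by blast
  have fV: "finite V" by (rule og_fin[OF og])
  have cv: "crk ?s (V - {x}) = crk ?s V \<and> independence_number (V - {x}) A = independence_number V A \<and>
         dd V A = dd (V - {x}) A + 1 \<and>
         card (cls (V - {x}) A ` nbrs V A x) + 1 = card (nbrs V A x)"
    by (rule cyc_vertex[OF og lo C0])
  have i: "skew_rank V A = skew_rank (del_vertex_V V x) (del_vertex_A A x)"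
    unfolding del_vertex_V_def tr_sr[OF og] tr_srV[OF og] using cv by simp
  have ii: "independence_number V A = independence_number (del_vertex_V V x) (del_vertex_A A x)"
    unfolding del_vertex_V_def tr_al using cv by simp
  have iii: "dim_d V A = dim_d (del_vertex_V V x) (del_vertex_A A x) + 1"
    unfolding del_vertex_V_def tr_dd[OF og] tr_ddV[OF og] using cv by simp
  have c: "int (card V) = int (card (V - {x})) + 1" using card_Suc_Diff1[OF fV xV] by simp
  have LO: "int (crk ?s V) + 2 * int (independence_number V A) = 2 * int (card V) - 2 * dd V A"
    using lo unfolding lower_optimal_def tr_srV[OF og] tr_ddV[OF og] .
  have iv: "lower_optimal (del_vertex_V V x) (del_vertex_A A x)"
    unfolding lower_optimal_def del_vertex_V_def tr_sr[OF og] tr_al tr_dd[OF og]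
    using LO cv c by linarith
  have v1: "card {C. is_cycle V A C \<and> on_cycle x C} = 1"
  proof -
    have "{C. is_cycle V A C \<and> on_cycle x C} = {C0}"
    proof
      show "{C0} \<subseteq> {C. is_cycle V A C \<and> on_cycle x C}" using C0 by blast
      show "{C. is_cycle V A C \<and> on_cycle x C} \<subseteq> {C0}"
      proof
        fix C assume "C \<in> {C. is_cycle V A C \<and> on_cycle x C}"
        then have C: "is_cycle V A C" "on_cycle x C" by auto
        have "C \<subseteq> C0" by (rule cycle_sub[OF og lo C0 C])
        moreover have "C0 \<subseteq> C" by (rule cycle_sub[OF og lo C C0])
        ultimately show "C \<in> {C0}" by blast
      qed
    qed
    then show ?thesis by simp
  qed
  have v2: "\<not> quasi_pendant V A x"
  proof
    assume "quasi_pendant V A x"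
    then obtain u where u: "u \<in> V" "adj A x u" "pendant V A u" unfolding quasi_pendant_def by blast
    have c1: "card (nbrs V A u) = 1" using u(3) unfolding pendant_def degree_def nbrs_def by simp
    have "adj A u x" using u(2) unfolding adj_def by blast
    then have xN: "x \<in> nbrs V A u" using xV unfolding nbrs_def by simp
    obtain v where v: "nbrs V A u = {v}" using c1 by (metis card_1_singletonE)
    then have Nu: "nbrs V A u = {x}" using xN by simp
    have ux: "u \<noteq> x"
    proof
      assume "u = x" then show False using u(2) noloop[OF og, of x] by simp
    qed
    have nadj: "\<not> adj A u j" if "j \<in> V" "j \<noteq> x" for j
    proof
      assume "adj A u j"
      then have "j \<in> nbrs V A u" using that unfolding nbrs_def by simp
      then show False using Nu that by simp
    qed
    have r0: "\<forall>j\<in>V - {x}. ?s u j = 0" using nadj by (simp add: se_zero)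
    have r1: "\<forall>i\<in>V - {x}. ?s i u = 0"
    proof
      fix i assume "i \<in> V - {x}"
      then have "\<not> adj A u i" using nadj by blast
      then have "\<not> adj A i u" unfolding adj_def by blast
      then show "?s i u = 0" by (simp add: se_zero)
    qed
    have "?s u x \<noteq> 0" using \<open>adj A u x\<close> by (simp add: se_zero)
    moreover have "?s x u \<noteq> 0" using u(2) by (simp add: se_zero)
    ultimately have p: "crk ?s (V - {u, x}) + 2 \<le> crk ?s V"
      by (rule crk_pend[OF fV u(1) xV ux _ _ r0 r1])
    have uV': "u \<in> V - {x}" using u(1) ux by simp
    have fV': "finite (V - {x})" using fV by simp
    have r0': "\<forall>j\<in>V - {x}. ?s u j = 0" by (rule r0)
    have "crk ?s (V - {x}) \<le> crk ?s (V - {x} - {u})"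
      by (rule crk_iso[OF fV' uV' r0' r1])
    moreover have "V - {x} - {u} = V - {u, x}" by blast
    ultimately show False using p cv by simp
  qed
  show ?thesis using i ii iii iv v1 v2 by blast
qed


end
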